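(* Let $X$ be a set, let $K,L$ be positive definite kernels on $X\times X$, and let $(\varphi,\mathscr{K})\in H_S(K)$ and $(\psi,\mathscr{L})\in H_S(L)$. Then $K\le L$ if and only if there exists a positive selfadjoint operator $B$ on $\mathscr{L}$ with $0\le B\le I$ such that $$K(x,y)=\langle\varphi(x),\varphi(y)\rangle_{\mathscr{K}}=\langle B^{1/2}\psi(x),B^{1/2}\psi(y)\rangle_{\mathscr{L}},\qquad x,y\in X.$$
   Context: A function $K:X\times X\to\mathbb{C}$ is positive definite (p.d.) if $\sum_{i,j=1}^n\overline{c_i}c_jK(x_i,x_j)\ge 0$ for all $n\in\mathbb{N}$, $x_i\in X$, $c_i\in\mathbb{C}$. For p.d. kernels $K,L$ on $X\times X$, $K\le L$ (Loewner order) means that $L-K$ is p.d. For a p.d. kernel $K$, $H_S(K)$ denotes the set of pairs $(\varphi,\mathscr{L})$ where $\mathscr{L}$ is a (separable) Hilbert space and $\varphi:X\to\mathscr{L}$ satisfies $K(x,y)=\langle\varphi(x),\varphi(y)\rangle_{\mathscr{L}}$ for all $x,y\in X$. *)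

theory Defs
  imports Complex_Main
begin

text \<open>The inner product
is conjugate-linear in the first and linear in the second argument, matching
the convention that K(x,y) = <phi x, phi y> is positive definite in the sense
sum conj(c_i) c_j K(x_i,x_j) >= 0.\<close>

class complex_inner = ab_group_add +
  fixes scaleC :: "complex \<Rightarrow> 'a \<Rightarrow> 'a"
    and cinner :: "'a \<Rightarrow> 'a \<Rightarrow> complex"
  assumes scaleC_add_right: "scaleC a (x + y) = scaleC a x + scaleC a y"
    and scaleC_add_left: "scaleC (a + b) x = scaleC a x + scaleC b x"
    and scaleC_scaleC: "scaleC a (scaleC b x) = scaleC (a * b) x"
    and scaleC_one: "scaleC 1 x = x"
    and cinner_commute: "cinner x y = cnj (cinner y x)"
    and cinner_add_right: "cinner x (y + z) = cinner x y + cinner x z"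
    and cinner_scaleC_right: "cinner x (scaleC a y) = a * cinner x y"
    and cinner_ge_zero: "Re (cinner x x) \<ge> 0"
    and cinner_eq_zero_iff: "cinner x x = 0 \<longleftrightarrow> x = 0"

definition cnorm :: "'a::complex_inner \<Rightarrow> real" where
  "cnorm x = sqrt (Re (cinner x x))"

class chilbert = complex_inner +
  assumes complete: "\<And>X::nat \<Rightarrow> 'a.
      (\<forall>e>0. \<exists>N. \<forall>m\<ge>N. \<forall>n\<ge>N. sqrt (Re (cinner (X m - X n) (X m - X n))) < e) \<Longrightarrow>
      (\<exists>l. \<forall>e>0. \<exists>N. \<forall>n\<ge>N. sqrt (Re (cinner (X n - l) (X n - l))) < e)"
    and separable: "\<exists>D::nat \<Rightarrow> 'a. \<forall>x. \<forall>e>0. \<exists>n. sqrt (Re (cinner (x - D n) (x - D n))) < e"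

definition bounded_clinear_op :: "('a::complex_inner \<Rightarrow> 'a) \<Rightarrow> bool" where
  "bounded_clinear_op B \<longleftrightarrow>
     (\<forall>x y. B (x + y) = B x + B y) \<and> (\<forall>a x. B (scaleC a x) = scaleC a (B x)) \<and>
     (\<exists>C. \<forall>x. cnorm (B x) \<le> C * cnorm x)"

definition selfadjoint_op :: "('a::complex_inner \<Rightarrow> 'a) \<Rightarrow> bool" where
  "selfadjoint_op B \<longleftrightarrow> (\<forall>x y. cinner (B x) y = cinner x (B y))"

definition positive_op :: "('a::complex_inner \<Rightarrow> 'a) \<Rightarrow> bool" where
  "positive_op B \<longleftrightarrow> bounded_clinear_op B \<and> selfadjoint_op B \<and>
     (\<forall>x. cinner x (B x) \<in> \<real> \<and> Re (cinner x (B x)) \<ge> 0)"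

definition op_le :: "('a::complex_inner \<Rightarrow> 'a) \<Rightarrow> ('a \<Rightarrow> 'a) \<Rightarrow> bool" where
  "op_le A B \<longleftrightarrow> positive_op (\<lambda>x. B x - A x)"

definition op_sqrt :: "('a::complex_inner \<Rightarrow> 'a) \<Rightarrow> ('a \<Rightarrow> 'a)" where
  "op_sqrt B = (THE R. positive_op R \<and> (\<forall>x. R (R x) = B x))"

definition pd_kernel :: "('x \<Rightarrow> 'x \<Rightarrow> complex) \<Rightarrow> bool" where
  "pd_kernel K \<longleftrightarrow> (\<forall>n (xs::nat \<Rightarrow> 'x) (c::nat \<Rightarrow> complex).
     (\<Sum>i<n. \<Sum>j<n. cnj (c i) * c j * K (xs i) (xs j)) \<in> \<real> \<and>
     Re (\<Sum>i<n. \<Sum>j<n. cnj (c i) * c j * K (xs i) (xs j)) \<ge> 0)"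

definition kernel_le :: "('x \<Rightarrow> 'x \<Rightarrow> complex) \<Rightarrow> ('x \<Rightarrow> 'x \<Rightarrow> complex) \<Rightarrow> bool" where
  "kernel_le K L \<longleftrightarrow> pd_kernel (\<lambda>x y. L x y - K x y)"

text \<open>(phi, H) \<in> H_S(K), where the separable Hilbert space H is the type 'h.\<close>
definition in_HS :: "('x \<Rightarrow> 'x \<Rightarrow> complex) \<Rightarrow> ('x \<Rightarrow> 'h::chilbert) \<Rightarrow> bool" where
  "in_HS K \<phi> \<longleftrightarrow> (\<forall>x y. K x y = cinner (\<phi> x) (\<phi> y))"

end

theory Submission
  imports Defs
begin


lemma scaleC_zero_left[simp]: "scaleC 0 (x::'a::complex_inner) = 0"
  by (metis add_cancel_right_right add_0 scaleC_add_left)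

lemma scaleC_zero_right[simp]: "scaleC a (0::'a::complex_inner) = 0"
  by (metis add_cancel_right_right add_0 scaleC_add_right)

lemma scaleC_minus_left: "scaleC (-a) (x::'a::complex_inner) = - scaleC a x"
  by (metis add.inverse_unique add.left_inverse scaleC_add_left scaleC_zero_left)

lemma scaleC_minus_right: "scaleC a (- x::'a::complex_inner) = - scaleC a x"
  by (metis add.inverse_unique add.left_inverse scaleC_add_right scaleC_zero_right)

lemma scaleC_diff_left: "scaleC (a - b) (x::'a::complex_inner) = scaleC a x - scaleC b x"
  by (metis diff_conv_add_uminus scaleC_add_left scaleC_minus_left)

lemma scaleC_diff_right: "scaleC a (x - y::'a::complex_inner) = scaleC a x - scaleC a y"
  by (metis diff_conv_add_uminus scaleC_add_right scaleC_minus_right)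

lemma cinner_add_left: "cinner (x + y) (z::'a::complex_inner) = cinner x z + cinner y z"
  by (metis cinner_add_right cinner_commute complex_cnj_add)

lemma cinner_scaleC_left: "cinner (scaleC a x) (y::'a::complex_inner) = cnj a * cinner x y"
  by (metis cinner_commute cinner_scaleC_right complex_cnj_mult)

lemma cinner_zero_right[simp]: "cinner x (0::'a::complex_inner) = 0"
  by (metis add_cancel_right_right add_0 cinner_add_right)

lemma cinner_zero_left[simp]: "cinner (0::'a::complex_inner) x = 0"
  by (metis add_cancel_right_right add_0 cinner_add_left)

lemma cinner_minus_right: "cinner x (- y::'a::complex_inner) = - cinner x y"
  by (metis add.inverse_unique add.left_inverse cinner_add_right cinner_zero_right)

lemma cinner_minus_left: "cinner (- x::'a::complex_inner) y = - cinner x y"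
  by (metis add.inverse_unique add.left_inverse cinner_add_left cinner_zero_left)

lemma cinner_diff_right: "cinner x (y - z::'a::complex_inner) = cinner x y - cinner x z"
  by (metis diff_conv_add_uminus cinner_add_right cinner_minus_right)

lemma cinner_diff_left: "cinner (x - y::'a::complex_inner) z = cinner x z - cinner y z"
  by (metis diff_conv_add_uminus cinner_add_left cinner_minus_left)

lemmas cinner_simps = cinner_add_left cinner_add_right cinner_diff_left cinner_diff_right
  cinner_minus_left cinner_minus_right cinner_scaleC_left cinner_scaleC_right

definition nsq :: "'a::complex_inner \<Rightarrow> real" where
  "nsq x = Re (cinner x x)"

lemma cinner_self_Im[simp]: "Im (cinner x (x::'a::complex_inner)) = 0"
proof -
  have "Im (cinner x x) = - Im (cinner x x)" by (metis cinner_commute cnj.simps(2))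
  thus ?thesis by simp
qed

lemma cinner_self_real: "cinner x (x::'a::complex_inner) = complex_of_real (nsq x)"
  by (simp add: nsq_def complex_eq_iff)

lemma nsq_ge0[simp]: "nsq x \<ge> 0"
  by (simp add: nsq_def cinner_ge_zero)

lemma nsq_eq0[simp]: "nsq x = 0 \<longleftrightarrow> x = 0"
  using cinner_self_real[of x] cinner_eq_zero_iff[of x] by auto

lemma nsq_zero[simp]: "nsq (0::'a::complex_inner) = 0" by simp

lemma Re_cinner_commute: "Re (cinner x y) = Re (cinner y (x::'a::complex_inner))"
  by (metis cinner_commute complex_cnj_cnj cnj.simps(1))

lemma cmod_cinner_commute: "cmod (cinner x y) = cmod (cinner y (x::'a::complex_inner))"
  by (metis cinner_commute complex_mod_cnj)

lemma nsq_add: "nsq (x + y) = nsq x + nsq y + 2 * Re (cinner x (y::'a::complex_inner))"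
  using Re_cinner_commute[of y x] by (simp add: nsq_def cinner_simps)

lemma nsq_diff: "nsq (x - y) = nsq x + nsq y - 2 * Re (cinner x (y::'a::complex_inner))"
  using Re_cinner_commute[of y x] by (simp add: nsq_def cinner_simps)

lemma nsq_minus[simp]: "nsq (- x) = nsq (x::'a::complex_inner)"
  by (simp add: nsq_def cinner_simps)

lemma nsq_diff_commute: "nsq (x - y) = nsq (y - x::'a::complex_inner)"
  by (metis minus_diff_eq nsq_minus)

lemma nsq_scaleC: "nsq (scaleC a x) = (cmod a)^2 * nsq (x::'a::complex_inner)"
proof -
  have "cinner (scaleC a x) (scaleC a x) = (cnj a * a) * cinner x x"
    by (simp add: cinner_simps)
  also have "cnj a * a = complex_of_real ((cmod a)^2)"
    by (metis complex_norm_square mult.commute of_real_power)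
  finally show ?thesis
    by (simp add: nsq_def)
qed

section \<open>Cauchy-Schwarz for Hermitian positive forms\<close>

lemma quad_aux:
  fixes A B C :: real
  assumes "\<And>t. 0 \<le> A - 2 * t * B + t^2 * B * C" "B \<ge> 0" "C \<ge> 0" "A \<ge> 0"
  shows "B \<le> A * C"
proof (cases "C = 0")
  case True
  show ?thesis
  proof (rule ccontr)
    assume "\<not> B \<le> A * C"
    hence "B > 0" using True by simp
    have h: "0 \<le> A - 2 * t * B" for t using assms(1)[of t] True by simp
    have "2 * ((A + 1) / (2 * B)) * B = A + 1" using \<open>B > 0\<close> by (simp add: field_simps)
    thus False using h[of "(A + 1) / (2 * B)"] by linarith
  qed
next
  case False
  hence "C > 0" using assms by simp
  have "0 \<le> A - 2 * (1/C) * B + (1/C)^2 * B * C" using assms(1) .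
  also have "\<dots> = A - B / C" using \<open>C > 0\<close> by (simp add: field_simps power2_eq_square)
  finally show ?thesis using \<open>C > 0\<close> by (simp add: field_simps)
qed

lemma cs_form:
  fixes f :: "'a::complex_inner \<Rightarrow> 'a \<Rightarrow> complex"
  assumes add2: "\<And>x y z. f x (y+z) = f x y + f x z"
    and add1: "\<And>x y z. f (x+y) z = f x z + f y z"
    and sc2: "\<And>x a y. f x (scaleC a y) = a * f x y"
    and sc1: "\<And>x a y. f (scaleC a x) y = cnj a * f x y"
    and herm: "\<And>x y. f x y = cnj (f y x)"
    and pos: "\<And>x. Re (f x x) \<ge> 0"
  shows "(cmod (f x y))^2 \<le> Re (f x x) * Re (f y y)"
proof -
  define b where "b = f y x"
  have fxy: "f x y = cnj b" using herm[of x y] unfolding b_def by simp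
  have diff2: "f u (v - w) = f u v - f u w" for u v w
    by (metis add2 add_diff_cancel_right' diff_add_cancel)
  have diff1: "f (v - w) u = f v u - f w u" for u v w
    by (metis add1 add_diff_cancel_right' diff_add_cancel)
  have e1: "f (x - w) (x - w) = f x x - f x w - f w x + f w w" for w
    by (simp only: diff1 diff2) (simp add: algebra_simps)
  have bb: "cnj b * b = complex_of_real ((cmod b)^2)"
    by (metis complex_norm_square mult.commute of_real_power)
  have "0 \<le> Re (f x x) - 2 * t * (cmod b)^2 + t^2 * (cmod b)^2 * Re (f y y)" for t :: real
  proof -
    define s where "s = complex_of_real t * b"
    have h1: "f x (scaleC s y) = complex_of_real (t * (cmod b)^2)"
      using bb by (simp add: sc2 fxy s_def mult.commute mult.left_commute)
    have h2: "f (scaleC s y) x = complex_of_real (t * (cmod b)^2)"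
      using bb by (simp add: sc1 b_def[symmetric] s_def mult.commute mult.left_commute)
    have h3: "f (scaleC s y) (scaleC s y) = complex_of_real (t^2 * (cmod b)^2) * f y y"
    proof -
      have "f (scaleC s y) (scaleC s y) = (cnj s * s) * f y y" by (simp add: sc1 sc2)
      moreover have "cnj s * s = complex_of_real (t^2 * (cmod b)^2)"
        using bb by (simp add: s_def power2_eq_square mult.commute mult.left_commute)
      ultimately show ?thesis by simp
    qed
    have "Re (f (x - scaleC s y) (x - scaleC s y))
        = Re (f x x) - 2 * t * (cmod b)^2 + t^2 * (cmod b)^2 * Re (f y y)"
      unfolding e1 h1 h2 h3 by simp
    thus ?thesis using pos by metis
  qed
  hence "(cmod b)^2 \<le> Re (f x x) * Re (f y y)"
    by (intro quad_aux) (auto simp: pos)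
  moreover have "cmod (f x y) = cmod b" using fxy by simp
  ultimately show ?thesis by simp
qed

lemma cauchy_schwarz_sq: "(cmod (cinner x y))^2 \<le> nsq x * nsq (y::'a::complex_inner)"
  unfolding nsq_def
  by (rule cs_form) (auto simp: cinner_simps cinner_ge_zero intro: cinner_commute)

lemma cnorm_nsq: "cnorm x = sqrt (nsq x)"
  by (simp add: cnorm_def nsq_def)

lemma cnorm_ge0[simp]: "cnorm x \<ge> 0"
  by (simp add: cnorm_nsq)

lemma cnorm_sq: "(cnorm x)^2 = nsq x"
  by (simp add: cnorm_nsq)

lemma cnorm_eq0[simp]: "cnorm x = 0 \<longleftrightarrow> x = 0"
  by (simp add: cnorm_nsq)

lemma cnorm_zero[simp]: "cnorm (0::'a::complex_inner) = 0" by simp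

lemma cauchy_schwarz: "cmod (cinner x y) \<le> cnorm x * cnorm (y::'a::complex_inner)"
proof -
  have "(cmod (cinner x y))^2 \<le> (cnorm x * cnorm y)^2"
    using cauchy_schwarz_sq[of x y] by (simp add: power_mult_distrib cnorm_sq)
  thus ?thesis using power2_le_imp_le by (metis cnorm_ge0 mult_nonneg_nonneg)
qed

lemma cnorm_triangle: "cnorm (x + y) \<le> cnorm x + cnorm (y::'a::complex_inner)"
proof -
  have "Re (cinner x y) \<le> cnorm x * cnorm y"
    using cauchy_schwarz[of x y] complex_Re_le_cmod order_trans by blast
  hence "nsq (x + y) \<le> (cnorm x + cnorm y)^2"
    by (simp add: nsq_add power2_sum cnorm_sq)
  thus ?thesis by (metis cnorm_ge0 add_nonneg_nonneg cnorm_sq power2_le_imp_le)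
qed

lemma cnorm_minus[simp]: "cnorm (- x) = cnorm (x::'a::complex_inner)"
  by (simp add: cnorm_nsq)

lemma cnorm_diff_commute: "cnorm (x - y) = cnorm (y - x::'a::complex_inner)"
  by (metis minus_diff_eq cnorm_minus)

lemma cnorm_diff_triangle: "cnorm (x - y) \<le> cnorm x + cnorm (y::'a::complex_inner)"
  by (metis cnorm_minus cnorm_triangle diff_conv_add_uminus)

lemma cnorm_triangle3: "cnorm (x - z) \<le> cnorm (x - y) + cnorm (y - z::'a::complex_inner)"
  by (metis cnorm_triangle diff_add_cancel add_diff_eq)

lemma cnorm_scaleC: "cnorm (scaleC a x) = cmod a * cnorm (x::'a::complex_inner)"
  by (simp add: cnorm_nsq nsq_scaleC real_sqrt_mult)

lemma cnorm_reverse: "\<bar>cnorm x - cnorm y\<bar> \<le> cnorm (x - y::'a::complex_inner)"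
  using cnorm_triangle3[of x 0 y] cnorm_triangle3[of y 0 x] cnorm_diff_commute[of x y]
  by (simp add: abs_le_iff)

definition conv :: "(nat \<Rightarrow> 'a::complex_inner) \<Rightarrow> 'a \<Rightarrow> bool" where
  "conv X l \<longleftrightarrow> (\<lambda>n. cnorm (X n - l)) \<longlonglongrightarrow> 0"

lemma null_cmp:
  fixes f g :: "nat \<Rightarrow> real"
  assumes "\<And>n. 0 \<le> f n" "\<And>n. f n \<le> g n" "g \<longlonglongrightarrow> 0"
  shows "f \<longlonglongrightarrow> 0"
  by (rule tendsto_sandwich[where f="\<lambda>_. 0" and g=f and h=g]) (use assms in auto)

lemma conv_const[simp]: "conv (\<lambda>n. x) x"
  by (simp add: conv_def)

lemma conv_add:
  assumes "conv X a" "conv Y b" shows "conv (\<lambda>n. X n + Y n) (a + b)"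
  unfolding conv_def
proof (rule null_cmp)
  show "cnorm (X n + Y n - (a + b)) \<le> cnorm (X n - a) + cnorm (Y n - b)" for n
    by (metis cnorm_triangle add_diff_add)
  show "(\<lambda>n. cnorm (X n - a) + cnorm (Y n - b)) \<longlonglongrightarrow> 0"
    using tendsto_add[OF assms[unfolded conv_def]] by simp
qed simp

lemma conv_minus:
  assumes "conv X a" shows "conv (\<lambda>n. - X n) (- a)"
proof -
  have "- X n - - a = - (X n - a)" for n by simp
  thus ?thesis using assms unfolding conv_def by (simp only: cnorm_minus)
qed

lemma conv_diff:
  assumes "conv X a" "conv Y b" shows "conv (\<lambda>n. X n - Y n) (a - b)"
  using conv_add[OF assms(1) conv_minus[OF assms(2)]] by (simp only: diff_conv_add_uminus)

lemma conv_scaleC: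
  assumes "conv X a" shows "conv (\<lambda>n. scaleC c (X n)) (scaleC c a)"
  using tendsto_mult_right_zero[OF assms[unfolded conv_def], where c="cmod c"]
  unfolding conv_def by (simp add: scaleC_diff_right[symmetric] cnorm_scaleC)

lemma conv_unique:
  assumes "conv X a" "conv X b" shows "a = b"
proof -
  have lim: "(\<lambda>n. cnorm (X n - a) + cnorm (X n - b)) \<longlonglongrightarrow> 0"
    using tendsto_add[OF assms[unfolded conv_def]] by simp
  have bd: "cnorm (a - b) \<le> cnorm (X n - a) + cnorm (X n - b)" for n
    using cnorm_triangle3[of a b "X n"] cnorm_diff_commute[of a "X n"] by linarith
  have "(\<lambda>n. cnorm (a - b)) \<longlonglongrightarrow> 0"
    by (rule null_cmp[OF _ bd lim]) simp
  hence "cnorm (a - b) = 0" by (simp add: LIMSEQ_const_iff)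
  thus ?thesis by simp
qed

lemma conv_cinner_left:
  assumes "conv X a" shows "(\<lambda>n. cinner (X n) y) \<longlonglongrightarrow> cinner a y"
proof -
  have "(\<lambda>n. cmod (cinner (X n) y - cinner a y)) \<longlonglongrightarrow> 0"
  proof (rule null_cmp)
    show "cmod (cinner (X n) y - cinner a y) \<le> cnorm (X n - a) * cnorm y" for n
      using cauchy_schwarz[of "X n - a" y] by (simp add: cinner_simps)
    show "(\<lambda>n. cnorm (X n - a) * cnorm y) \<longlonglongrightarrow> 0"
      using assms tendsto_mult_left_zero unfolding conv_def by blast
  qed simp
  hence "(\<lambda>n. cinner (X n) y - cinner a y) \<longlonglongrightarrow> 0" by (rule tendsto_norm_zero_cancel)
  thus ?thesis by (rule LIM_zero_cancel)
qed

lemma conv_cinner_right: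
  assumes "conv X a" shows "(\<lambda>n. cinner y (X n)) \<longlonglongrightarrow> cinner y a"
proof -
  have "(\<lambda>n. cnj (cinner (X n) y)) \<longlonglongrightarrow> cnj (cinner a y)"
    using conv_cinner_left[OF assms] tendsto_cnj by blast
  hence h: "(\<lambda>n. cnj (cinner (X n) y)) \<longlonglongrightarrow> cinner y a"
    by (simp only: cinner_commute[of y a, symmetric])
  have eq: "(\<lambda>n. cinner y (X n)) = (\<lambda>n. cnj (cinner (X n) y))"
    by (rule ext, rule cinner_commute)
  show ?thesis unfolding eq by (rule h)
qed

lemma conv_cnorm:
  assumes "conv X a" shows "(\<lambda>n. cnorm (X n)) \<longlonglongrightarrow> cnorm a"
proof -
  have "(\<lambda>n. norm (cnorm (X n) - cnorm a)) \<longlonglongrightarrow> 0"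
  proof (rule null_cmp[OF _ _ assms[unfolded conv_def]])
    show "norm (cnorm (X n) - cnorm a) \<le> cnorm (X n - a)" for n
      using cnorm_reverse[of "X n" a] by simp
  qed simp
  hence "(\<lambda>n. cnorm (X n) - cnorm a) \<longlonglongrightarrow> 0" by (rule tendsto_norm_zero_cancel)
  thus ?thesis by (rule LIM_zero_cancel)
qed

lemma conv_nsq:
  assumes "conv X a" shows "(\<lambda>n. nsq (X n)) \<longlonglongrightarrow> nsq a"
  using tendsto_power[OF conv_cnorm[OF assms], of 2] by (simp add: cnorm_sq)

definition cauchy :: "(nat \<Rightarrow> 'a::complex_inner) \<Rightarrow> bool" where
  "cauchy X \<longleftrightarrow> (\<forall>e>0. \<exists>N. \<forall>m\<ge>N. \<forall>n\<ge>N. cnorm (X m - X n) < e)"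

lemma cauchy_conv:
  fixes X :: "nat \<Rightarrow> 'a::chilbert"
  assumes "cauchy X" shows "\<exists>l. conv X l"
proof -
  obtain l where l: "\<forall>e>0. \<exists>N. \<forall>n\<ge>N. cnorm (X n - l) < e"
    using complete[of X] assms unfolding cauchy_def cnorm_def by blast
  have "conv X l" unfolding conv_def
    by (rule metric_LIMSEQ_I) (use l in \<open>auto simp: dist_real_def\<close>)
  thus ?thesis by blast
qed

lemma conv_cauchy:
  assumes "conv X l" shows "cauchy X"
  unfolding cauchy_def
proof (intro allI impI)
  fix e :: real assume "e > 0"
  have "\<exists>N. \<forall>n\<ge>N. norm (cnorm (X n - l) - 0) < e/2"
    using assms \<open>e > 0\<close> unfolding conv_def LIMSEQ_iff by (meson half_gt_zero)
  then obtain N where N: "\<forall>n\<ge>N. cnorm (X n - l) < e/2" by auto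
  show "\<exists>N. \<forall>m\<ge>N. \<forall>n\<ge>N. cnorm (X m - X n) < e"
  proof (intro exI allI impI)
    fix m n assume "m \<ge> N" "n \<ge> N"
    have "cnorm (X m - X n) \<le> cnorm (X m - l) + cnorm (l - X n)" by (rule cnorm_triangle3)
    also have "\<dots> < e" using N[rule_format, OF \<open>m \<ge> N\<close>] N[rule_format, OF \<open>n \<ge> N\<close>] cnorm_diff_commute[of l "X n"] by linarith
    finally show "cnorm (X m - X n) < e" .
  qed
qed



lemma bcl_add: "bounded_clinear_op T \<Longrightarrow> T (x + y) = T x + T y"
  by (simp add: bounded_clinear_op_def)

lemma bcl_scale: "bounded_clinear_op T \<Longrightarrow> T (scaleC a x) = scaleC a (T x)"
  by (simp add: bounded_clinear_op_def)

lemma bcl_zero: "bounded_clinear_op T \<Longrightarrow> T 0 = (0::'a::complex_inner)"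
  using bcl_add[of T 0 0] by simp

lemma bcl_minus: "bounded_clinear_op T \<Longrightarrow> T (- x) = - T (x::'a::complex_inner)"
proof -
  assume b: "bounded_clinear_op T"
  have "T x + T (- x) = 0" using bcl_add[OF b, of x "- x"] bcl_zero[OF b] by simp
  thus ?thesis using add.inverse_unique by metis
qed

lemma bcl_diff: "bounded_clinear_op T \<Longrightarrow> T (x - y) = T x - T (y::'a::complex_inner)"
  using bcl_add[of T x "- y"] bcl_minus[of T y] by simp

lemma bcl_bound: "bounded_clinear_op T \<Longrightarrow> \<exists>K>0. \<forall>x. cnorm (T x) \<le> K * cnorm x"
proof -
  assume "bounded_clinear_op T"
  then obtain K where K: "\<forall>x. cnorm (T x) \<le> K * cnorm x" unfolding bounded_clinear_op_def by blast
  have "cnorm (T x) \<le> max K 1 * cnorm x" for x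
    using K[rule_format, of x] cnorm_ge0[of x] by (meson max.cobounded1 mult_right_mono order_trans)
  thus ?thesis by (intro exI[of _ "max K 1"]) auto
qed

lemma bcl_conv:
  assumes "bounded_clinear_op T" "conv X l" shows "conv (\<lambda>n. T (X n)) (T l)"
proof -
  obtain K where K: "K > 0" "\<forall>x. cnorm (T x) \<le> K * cnorm x" using bcl_bound[OF assms(1)] by blast
  show ?thesis unfolding conv_def
  proof (rule null_cmp)
    show "cnorm (T (X n) - T l) \<le> K * cnorm (X n - l)" for n
      using K(2) bcl_diff[OF assms(1), of "X n" l] by metis
    show "(\<lambda>n. K * cnorm (X n - l)) \<longlonglongrightarrow> 0"
      using tendsto_mult_right_zero[OF assms(2)[unfolded conv_def], where c=K] by simp
  qed simp
qed

lemma bcl_comp: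
  assumes "bounded_clinear_op S" "bounded_clinear_op T" shows "bounded_clinear_op (\<lambda>x. S (T x))"
proof -
  obtain K1 where K1: "K1 > 0" "\<forall>x. cnorm (S x) \<le> K1 * cnorm x" using bcl_bound[OF assms(1)] by blast
  obtain K2 where K2: "K2 > 0" "\<forall>x. cnorm (T x) \<le> K2 * cnorm x" using bcl_bound[OF assms(2)] by blast
  have "cnorm (S (T x)) \<le> (K1 * K2) * cnorm x" for x
  proof -
    have "cnorm (S (T x)) \<le> K1 * cnorm (T x)" using K1 by blast
    also have "\<dots> \<le> K1 * (K2 * cnorm x)" using K2 K1(1) by (simp add: mult_left_mono)
    finally show ?thesis by (simp add: mult.assoc)
  qed
  thus ?thesis using assms unfolding bounded_clinear_op_def by auto
qed

lemma bcl_addop: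
  assumes "bounded_clinear_op S" "bounded_clinear_op T" shows "bounded_clinear_op (\<lambda>x. S x + T x)"
proof -
  obtain K1 where K1: "K1 > 0" "\<forall>x. cnorm (S x) \<le> K1 * cnorm x" using bcl_bound[OF assms(1)] by blast
  obtain K2 where K2: "K2 > 0" "\<forall>x. cnorm (T x) \<le> K2 * cnorm x" using bcl_bound[OF assms(2)] by blast
  have "cnorm (S x + T x) \<le> (K1 + K2) * cnorm x" for x
    using cnorm_triangle[of "S x" "T x"] K1(2)[rule_format, of x] K2(2)[rule_format, of x]
    by (simp add: distrib_right)
  moreover have "S (x + y) + T (x + y) = (S x + T x) + (S y + T y)" for x y
    using assms by (simp add: bcl_add algebra_simps)
  moreover have "S (scaleC a x) + T (scaleC a x) = scaleC a (S x + T x)" for a x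
    using assms by (simp add: bcl_scale scaleC_add_right)
  ultimately show ?thesis unfolding bounded_clinear_op_def by blast
qed

lemma bcl_scaleop:
  assumes "bounded_clinear_op S" shows "bounded_clinear_op (\<lambda>x. scaleC c (S x))"
proof -
  obtain K1 where K1: "K1 > 0" "\<forall>x. cnorm (S x) \<le> K1 * cnorm x" using bcl_bound[OF assms(1)] by blast
  have "cnorm (scaleC c (S x)) \<le> (cmod c * K1) * cnorm x" for x
    using K1(2)[rule_format, of x] by (simp add: cnorm_scaleC mult.assoc mult_left_mono)
  moreover have "scaleC c (S (x + y)) = scaleC c (S x) + scaleC c (S y)" for x y
    using assms by (simp add: bcl_add scaleC_add_right)
  moreover have "scaleC c (S (scaleC a x)) = scaleC a (scaleC c (S x))" for a x
    using assms by (simp add: bcl_scale scaleC_scaleC mult.commute)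
  ultimately show ?thesis unfolding bounded_clinear_op_def by blast
qed

lemma bcl_id: "bounded_clinear_op (\<lambda>x. x)"
  unfolding bounded_clinear_op_def by (auto intro: exI[of _ 1])

lemma bcl_zeroop: "bounded_clinear_op (\<lambda>x. 0::'a::complex_inner)"
  unfolding bounded_clinear_op_def by (auto intro: exI[of _ 1])

lemma bcl_diffop:
  assumes "bounded_clinear_op S" "bounded_clinear_op T" shows "bounded_clinear_op (\<lambda>x. S x - T x)"
proof -
  have "bounded_clinear_op (\<lambda>x. S x + scaleC (-1) (T x))"
    by (rule bcl_addop[OF assms(1) bcl_scaleop[OF assms(2)]])
  moreover have "(\<lambda>x. S x + scaleC (-1) (T x)) = (\<lambda>x. S x - T x)"
    by (rule ext) (simp add: scaleC_minus_left scaleC_one)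
  ultimately show ?thesis by simp
qed

lemma bcl_funpow: "bounded_clinear_op T \<Longrightarrow> bounded_clinear_op (T ^^ k)"
proof (induction k)
  case 0 thus ?case using bcl_id by (simp add: id_def)
next
  case (Suc k)
  have "bounded_clinear_op (\<lambda>x. T ((T ^^ k) x))" by (rule bcl_comp[OF Suc.prems Suc.IH[OF Suc.prems]])
  thus ?case by (simp add: o_def)
qed

lemma sa_sym: "selfadjoint_op T \<Longrightarrow> cinner (T x) y = cinner x (T y)"
  by (simp add: selfadjoint_op_def)

lemma sa_real: "selfadjoint_op T \<Longrightarrow> cinner x (T x) \<in> \<real>"
proof -
  assume "selfadjoint_op T"
  hence "cinner x (T x) = cnj (cinner x (T x))"
    using sa_sym[of T x x] cinner_commute[of "T x" x] by simp
  thus ?thesis using Reals_cnj_iff by metis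
qed

lemma positive_opI:
  assumes "bounded_clinear_op T" "selfadjoint_op T" "\<And>x. Re (cinner x (T x)) \<ge> 0"
  shows "positive_op T"
  using assms sa_real unfolding positive_op_def by blast

lemma pos_bcl: "positive_op T \<Longrightarrow> bounded_clinear_op T"
  by (simp add: positive_op_def)

lemma pos_sa: "positive_op T \<Longrightarrow> selfadjoint_op T"
  by (simp add: positive_op_def)

lemma pos_ge0: "positive_op T \<Longrightarrow> Re (cinner x (T x)) \<ge> 0"
  by (simp add: positive_op_def)

lemma pos_cs:
  assumes "positive_op T"
  shows "(cmod (cinner x (T y)))^2 \<le> Re (cinner x (T x)) * Re (cinner y (T y))"
proof (rule cs_form[where f="\<lambda>u v. cinner u (T v)"])
  have b: "bounded_clinear_op T" and s: "selfadjoint_op T" using assms by (auto simp: positive_op_def)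
  show "cinner u (T (v + w)) = cinner u (T v) + cinner u (T w)" for u v w
    using b by (simp add: bcl_add cinner_add_right)
  show "cinner (u + v) (T w) = cinner u (T w) + cinner v (T w)" for u v w
    by (simp add: cinner_add_left)
  show "cinner u (T (scaleC a v)) = a * cinner u (T v)" for u a v
    using b by (simp add: bcl_scale cinner_scaleC_right)
  show "cinner (scaleC a u) (T v) = cnj a * cinner u (T v)" for u a v
    by (simp add: cinner_scaleC_left)
  show "cinner u (T v) = cnj (cinner v (T u))" for u v
    using sa_sym[OF s, of u v] cinner_commute[of "T u" v] by simp
  show "Re (cinner u (T u)) \<ge> 0" for u using assms by (rule pos_ge0)
qed

lemma pos_zero:
  assumes "positive_op T" "Re (cinner x (T x)) = 0" shows "T x = 0"
proof -
  have s: "selfadjoint_op T" using assms by (simp add: positive_op_def)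
  have "(cmod (cinner x (T (T x))))^2 \<le> 0"
    using pos_cs[OF assms(1), of x "T x"] assms(2) by simp
  hence "cinner x (T (T x)) = 0" by simp
  hence "cinner (T x) (T x) = 0" using sa_sym[OF s, of x "T x"] by simp
  thus ?thesis by (simp add: cinner_eq_zero_iff)
qed

lemma op_le_id_Re: "op_le T id \<Longrightarrow> Re (cinner x (T x)) \<le> nsq x"
proof -
  assume "op_le T id"
  hence "Re (cinner x (x - T x)) \<ge> 0" unfolding op_le_def positive_op_def by simp
  thus ?thesis by (simp add: cinner_diff_right nsq_def)
qed

lemma pos_contr:
  assumes "positive_op T" "op_le T id" shows "cnorm (T x) \<le> cnorm x"
proof -
  have s: "selfadjoint_op T" using assms by (simp add: positive_op_def)
  have "(cmod (cinner (T x) (T x)))^2 \<le> Re (cinner (T x) (T (T x))) * Re (cinner x (T x))"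
    using pos_cs[OF assms(1), of "T x" x] by simp
  moreover have "cmod (cinner (T x) (T x)) = nsq (T x)"
    by (simp add: cinner_self_real)
  moreover have "Re (cinner (T x) (T (T x))) \<le> nsq (T x)" by (rule op_le_id_Re[OF assms(2)])
  moreover have "Re (cinner x (T x)) \<le> nsq x" by (rule op_le_id_Re[OF assms(2)])
  moreover have "Re (cinner x (T x)) \<ge> 0" by (rule pos_ge0[OF assms(1)])
  ultimately have "(nsq (T x))^2 \<le> nsq (T x) * nsq x"
    using mult_mono[of "Re (cinner (T x) (T (T x)))" "nsq (T x)" "Re (cinner x (T x))" "nsq x"]
    by (metis nsq_ge0 order_trans)
  hence h: "nsq (T x) * nsq (T x) \<le> nsq (T x) * nsq x" by (simp add: power2_eq_square)
  have "nsq (T x) \<le> nsq x"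
  proof (cases "nsq (T x) = 0")
    case True thus ?thesis by simp
  next
    case False
    hence "nsq (T x) > 0" using nsq_ge0[of "T x"] by linarith
    thus ?thesis using h mult_le_cancel_left_pos by blast
  qed
  thus ?thesis by (simp add: cnorm_nsq)
qed

lemma sa_addop: "selfadjoint_op S \<Longrightarrow> selfadjoint_op T \<Longrightarrow> selfadjoint_op (\<lambda>x. S x + T x)"
  by (simp add: selfadjoint_op_def cinner_add_left cinner_add_right)

lemma sa_scaleop: "selfadjoint_op S \<Longrightarrow> selfadjoint_op (\<lambda>x. scaleC (complex_of_real r) (S x))"
  by (simp add: selfadjoint_op_def cinner_scaleC_left cinner_scaleC_right)

lemma sa_diffop: "selfadjoint_op S \<Longrightarrow> selfadjoint_op T \<Longrightarrow> selfadjoint_op (\<lambda>x. S x - T x)"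
  by (simp add: selfadjoint_op_def cinner_diff_left cinner_diff_right)

lemma sa_id: "selfadjoint_op (\<lambda>x. x)"
  by (simp add: selfadjoint_op_def)



section \<open>Square root of 0 <= A <= I\<close>

locale sqrt_ctx =
  fixes A :: "'a::chilbert \<Rightarrow> 'a"
  assumes posA: "positive_op A" and leA: "op_le A id"
begin

definition C :: "'a \<Rightarrow> 'a" where "C x = x - A x"

lemma bclA: "bounded_clinear_op A" using posA by (rule pos_bcl)
lemma saA: "selfadjoint_op A" using posA by (rule pos_sa)

lemma C_eq: "C = (\<lambda>x. x - A x)" by (rule ext) (simp add: C_def)

lemma posC: "positive_op C"
  using leA unfolding op_le_def C_eq by (simp add: id_def)

lemma leC: "op_le C id"
proof -
  have "(\<lambda>x. id x - C x) = A" by (rule ext) (simp add: C_def)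
  thus ?thesis unfolding op_le_def using posA by simp
qed

lemma bclC: "bounded_clinear_op C" using posC by (rule pos_bcl)
lemma saC: "selfadjoint_op C" using posC by (rule pos_sa)

lemma contrC: "cnorm (C x) \<le> cnorm x" by (rule pos_contr[OF posC leC])

inductive pc :: "('a \<Rightarrow> 'a) \<Rightarrow> bool" where
  pc_pow: "pc (C ^^ k)"
| pc_zero: "pc (\<lambda>x. 0)"
| pc_add: "pc S \<Longrightarrow> pc T \<Longrightarrow> pc (\<lambda>x. S x + T x)"
| pc_scale: "r \<ge> 0 \<Longrightarrow> pc S \<Longrightarrow> pc (\<lambda>x. scaleC (complex_of_real r) (S x))"

lemma pc_bcl: "pc S \<Longrightarrow> bounded_clinear_op S"
proof (induction rule: pc.induct)
  case (pc_pow k) thus ?case by (rule bcl_funpow[OF bclC])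
next
  case pc_zero thus ?case by (rule bcl_zeroop)
next
  case (pc_add S T) show ?case by (rule bcl_addop[OF pc_add.IH])
next
  case (pc_scale r S) show ?case by (rule bcl_scaleop[OF pc_scale.IH])
qed

lemma pow_comm: "(C ^^ k) (C x) = C ((C ^^ k) x)"
  by (rule funpow_swap1[symmetric])

lemma sa_pow: "selfadjoint_op (C ^^ k)"
proof (induction k)
  case 0 thus ?case by (simp add: selfadjoint_op_def)
next
  case (Suc k)
  show ?case unfolding selfadjoint_op_def
  proof (intro allI)
    fix x y
    have "cinner ((C ^^ Suc k) x) y = cinner (C ((C ^^ k) x)) y" by simp
    also have "\<dots> = cinner ((C ^^ k) x) (C y)" by (rule sa_sym[OF saC])
    also have "\<dots> = cinner x ((C ^^ k) (C y))" by (rule sa_sym[OF Suc.IH])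
    also have "\<dots> = cinner x ((C ^^ Suc k) y)" by (simp add: pow_comm)
    finally show "cinner ((C ^^ Suc k) x) y = cinner x ((C ^^ Suc k) y)" .
  qed
qed

lemma pc_sa: "pc S \<Longrightarrow> selfadjoint_op S"
proof (induction rule: pc.induct)
  case (pc_pow k) thus ?case by (rule sa_pow)
next
  case pc_zero thus ?case by (simp add: selfadjoint_op_def)
next
  case (pc_add S T) show ?case by (rule sa_addop[OF pc_add.IH])
next
  case (pc_scale r S) show ?case by (rule sa_scaleop[OF pc_scale.IH])
qed

lemma pow_ge0: "Re (cinner x ((C ^^ k) x)) \<ge> 0"
proof -
  define j where "j = k div 2"
  have "k = 2 * j \<or> k = Suc (2 * j)" unfolding j_def by presburger
  thus ?thesis
  proof
    assume k: "k = 2 * j"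
    have "(C ^^ k) x = (C ^^ j) ((C ^^ j) x)" unfolding k by (simp add: mult_2 funpow_add)
    hence "cinner x ((C ^^ k) x) = cinner ((C ^^ j) x) ((C ^^ j) x)"
      using sa_sym[OF sa_pow[of j], of x "(C ^^ j) x"] by simp
    thus ?thesis by (simp add: cinner_ge_zero)
  next
    assume k: "k = Suc (2 * j)"
    have "(C ^^ k) x = (C ^^ j) (C ((C ^^ j) x))" unfolding k
      by (simp add: mult_2 funpow_add pow_comm)
    hence "cinner x ((C ^^ k) x) = cinner ((C ^^ j) x) (C ((C ^^ j) x))"
      using sa_sym[OF sa_pow[of j], of x "C ((C ^^ j) x)"] by simp
    thus ?thesis using pos_ge0[OF posC] by simp
  qed
qed

lemma pc_ge0: "pc S \<Longrightarrow> Re (cinner x (S x)) \<ge> 0"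
proof (induction arbitrary: x rule: pc.induct)
  case (pc_pow k) thus ?case by (rule pow_ge0)
next
  case pc_zero thus ?case by simp
next
  case (pc_add S T) thus ?case by (simp add: cinner_add_right)
next
  case (pc_scale r S) thus ?case by (simp add: cinner_scaleC_right)
qed

lemma pc_pos: "pc S \<Longrightarrow> positive_op S"
  by (rule positive_opI[OF pc_bcl pc_sa pc_ge0])

lemma pc_C: "pc C"
  using pc_pow[of 1] by simp

lemma pc_pow_comp: "pc T \<Longrightarrow> pc (\<lambda>x. (C ^^ k) (T x))"
proof (induction rule: pc.induct)
  case (pc_pow j)
  have eq: "(\<lambda>x. (C ^^ k) ((C ^^ j) x)) = C ^^ (k + j)" by (simp add: funpow_add fun_eq_iff)
  show ?case unfolding eq by (rule pc.pc_pow)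
next
  case pc_zero
  have "(C ^^ k) 0 = 0" using bcl_zero[OF bcl_funpow[OF bclC]] by simp
  thus ?case using pc.pc_zero by simp
next
  case (pc_add S T)
  have eq: "(\<lambda>x. (C ^^ k) (S x + T x)) = (\<lambda>x. (C ^^ k) (S x) + (C ^^ k) (T x))"
    using bcl_add[OF bcl_funpow[OF bclC]] by simp
  show ?case unfolding eq by (rule pc.pc_add[OF pc_add.IH])
next
  case (pc_scale r S)
  have eq: "(\<lambda>x. (C ^^ k) (scaleC (complex_of_real r) (S x))) = (\<lambda>x. scaleC (complex_of_real r) ((C ^^ k) (S x)))"
    using bcl_scale[OF bcl_funpow[OF bclC]] by simp
  show ?case unfolding eq by (rule pc.pc_scale[OF pc_scale.hyps(1) pc_scale.IH])
qed

lemma pc_comp: "pc S \<Longrightarrow> pc T \<Longrightarrow> pc (\<lambda>x. S (T x))"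
proof (induction rule: pc.induct)
  case (pc_pow k) thus ?case by (rule pc_pow_comp)
next
  case pc_zero thus ?case using pc.pc_zero by simp
next
  case (pc_add S1 S2) thus ?case using pc.pc_add by simp
next
  case (pc_scale r S) thus ?case using pc.pc_scale by simp
qed

lemma pc_comm_C: "pc S \<Longrightarrow> S (C x) = C (S x)"
proof (induction arbitrary: x rule: pc.induct)
  case (pc_pow k) thus ?case by (rule pow_comm)
next
  case pc_zero thus ?case using bcl_zero[OF bclC] by simp
next
  case (pc_add S T) thus ?case using bcl_add[OF bclC] by simp
next
  case (pc_scale r S) thus ?case using bcl_scale[OF bclC] by simp
qed

lemma pc_comm_pow: "pc S \<Longrightarrow> S ((C ^^ k) x) = (C ^^ k) (S x)"
proof (induction k arbitrary: x)
  case 0 thus ?case by simp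
next
  case (Suc k)
  have "S ((C ^^ Suc k) x) = S (C ((C ^^ k) x))" by simp
  also have "\<dots> = C (S ((C ^^ k) x))" by (rule pc_comm_C[OF Suc.prems])
  also have "\<dots> = C ((C ^^ k) (S x))" using Suc by simp
  finally show ?case by simp
qed

lemma pc_commute: "pc T \<Longrightarrow> pc S \<Longrightarrow> S (T x) = T (S x)"
proof (induction arbitrary: x rule: pc.induct)
  case (pc_pow k) thus ?case by (rule pc_comm_pow)
next
  case pc_zero thus ?case using bcl_zero[OF pc_bcl[OF pc_zero]] by simp
next
  case (pc_add T1 T2) thus ?case using bcl_add[OF pc_bcl[OF pc_add.prems]] by simp
next
  case (pc_scale r T) thus ?case using bcl_scale[OF pc_bcl[OF pc_scale.prems]] by simp
qed

primrec Yn :: "nat \<Rightarrow> 'a \<Rightarrow> 'a" where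
  "Yn 0 = (\<lambda>x. 0)"
| "Yn (Suc n) = (\<lambda>x. scaleC (complex_of_real (1/2)) (C x + Yn n (Yn n x)))"

declare Yn.simps[simp del]

lemma pc_Yn: "pc (Yn n)"
proof (induction n)
  case 0 thus ?case using pc_zero by (simp add: Yn.simps)
next
  case (Suc n)
  have "pc (\<lambda>x. C x + Yn n (Yn n x))" by (rule pc_add[OF pc_C pc_comp[OF Suc Suc]])
  hence "pc (\<lambda>x. scaleC (complex_of_real (1/2)) (C x + Yn n (Yn n x)))" by (rule pc_scale[rotated]) simp
  thus ?case by (simp add: Yn.simps)
qed

lemma bcl_Yn: "bounded_clinear_op (Yn n)" by (rule pc_bcl[OF pc_Yn])

lemma pc_Ydiff1: "pc (\<lambda>x. Yn (Suc n) x - Yn n x)"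
proof (induction n)
  case 0
  have "(\<lambda>x. Yn (Suc 0) x - Yn 0 x) = (\<lambda>x. scaleC (complex_of_real (1/2)) (C x))" by (simp add: Yn.simps)
  moreover have "pc (\<lambda>x. scaleC (complex_of_real (1/2)) (C x))" by (rule pc_scale[OF _ pc_C]) simp
  ultimately show ?case by simp
next
  case (Suc n)
  let ?Y1 = "Yn (Suc n)" and ?Y0 = "Yn n"
  have eq: "Yn (Suc (Suc n)) x - Yn (Suc n) x
      = scaleC (complex_of_real (1/2)) (?Y1 (?Y1 x + ?Y0 x) - ?Y0 (?Y1 x + ?Y0 x))" for x
  proof -
    have c: "?Y1 (?Y0 x) = ?Y0 (?Y1 x)" by (rule pc_commute[OF pc_Yn pc_Yn])
    have "?Y1 (?Y1 x + ?Y0 x) - ?Y0 (?Y1 x + ?Y0 x)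
        = (?Y1 (?Y1 x) + ?Y1 (?Y0 x)) - (?Y0 (?Y1 x) + ?Y0 (?Y0 x))"
      by (simp only: bcl_add[OF bcl_Yn])
    also have "\<dots> = ?Y1 (?Y1 x) - ?Y0 (?Y0 x)" unfolding c by (simp add: algebra_simps)
    finally have e2: "?Y1 (?Y1 x + ?Y0 x) - ?Y0 (?Y1 x + ?Y0 x) = ?Y1 (?Y1 x) - ?Y0 (?Y0 x)" .
    moreover have "Yn (Suc (Suc n)) x - Yn (Suc n) x
       = scaleC (complex_of_real (1/2)) (?Y1 (?Y1 x) - ?Y0 (?Y0 x))"
    proof -
      have "Yn (Suc (Suc n)) x - Yn (Suc n) x
          = scaleC (complex_of_real (1/2)) ((C x + ?Y1 (?Y1 x)) - (C x + ?Y0 (?Y0 x)))"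
        by (simp only: Yn.simps(2) scaleC_diff_right)
      thus ?thesis by simp
    qed
    ultimately show ?thesis using e2 by simp
  qed
  have "pc (\<lambda>x. (\<lambda>y. ?Y1 y - ?Y0 y) (?Y1 x + ?Y0 x))"
    by (rule pc_comp[OF Suc pc_add[OF pc_Yn pc_Yn]])
  hence "pc (\<lambda>x. scaleC (complex_of_real (1/2)) (?Y1 (?Y1 x + ?Y0 x) - ?Y0 (?Y1 x + ?Y0 x)))"
    by (intro pc_scale) simp_all
  thus ?case unfolding eq[symmetric] .
qed

lemma pc_Ydiff: "pc (\<lambda>x. Yn (n + k) x - Yn n x)"
proof (induction k)
  case 0 thus ?case using pc_zero by simp
next
  case (Suc k)
  have "pc (\<lambda>x. (Yn (Suc (n + k)) x - Yn (n + k) x) + (Yn (n + k) x - Yn n x))"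
    by (rule pc_add[OF pc_Ydiff1 Suc])
  thus ?case by simp
qed

lemma Yn_contr: "cnorm (Yn n x) \<le> cnorm x"
proof (induction n arbitrary: x)
  case 0 thus ?case by (simp add: Yn.simps)
next
  case (Suc n)
  have "cnorm (Yn (Suc n) x) = (1/2) * cnorm (C x + Yn n (Yn n x))"
    by (simp add: cnorm_scaleC Yn.simps)
  also have "\<dots> \<le> (1/2) * (cnorm (C x) + cnorm (Yn n (Yn n x)))"
    using cnorm_triangle by simp
  also have "\<dots> \<le> (1/2) * (cnorm x + cnorm x)"
    using contrC[of x] Suc.IH[of "Yn n x"] Suc.IH[of x] by simp
  finally show ?case by simp
qed

lemma Re_Yn_le: "Re (cinner x (Yn n x)) \<le> nsq x"
proof -
  have "Re (cinner x (Yn n x)) \<le> cmod (cinner x (Yn n x))" by (rule complex_Re_le_cmod)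
  also have "\<dots> \<le> cnorm x * cnorm (Yn n x)" by (rule cauchy_schwarz)
  also have "\<dots> \<le> cnorm x * cnorm x" using Yn_contr by (simp add: mult_left_mono)
  finally show ?thesis by (simp add: cnorm_nsq)
qed

lemma key_est:
  assumes "positive_op D" "\<And>x. cnorm (D x) \<le> 2 * cnorm x"
  shows "(nsq (D x))^2 \<le> 8 * nsq x * Re (cinner x (D x))"
proof -
  have s: "selfadjoint_op D" using assms(1) by (rule pos_sa)
  have "nsq (D x) = Re (cinner x (D (D x)))"
    using sa_sym[OF s, of x "D x"] by (simp add: nsq_def)
  also have "\<dots> \<le> cmod (cinner x (D (D x)))" by (rule complex_Re_le_cmod)
  finally have h1: "nsq (D x) \<le> cmod (cinner x (D (D x)))" .
  have h2: "(cmod (cinner x (D (D x))))^2 \<le> Re (cinner x (D x)) * Re (cinner (D x) (D (D x)))"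
    by (rule pos_cs[OF assms(1)])
  have "Re (cinner (D x) (D (D x))) \<le> cmod (cinner (D x) (D (D x)))" by (rule complex_Re_le_cmod)
  also have "\<dots> \<le> cnorm (D x) * cnorm (D (D x))" by (rule cauchy_schwarz)
  also have "\<dots> \<le> (2 * cnorm x) * (2 * cnorm (D x))"
    by (rule mult_mono[OF assms(2)[of x] assms(2)[of "D x"]]) simp_all
  also have "\<dots> \<le> (2 * cnorm x) * (2 * (2 * cnorm x))"
    by (rule mult_left_mono) (use assms(2)[of x] in simp_all)
  also have "\<dots> = 8 * (cnorm x * cnorm x)" by simp
  also have "\<dots> = 8 * nsq x" by (simp add: cnorm_nsq)
  finally have h3: "Re (cinner (D x) (D (D x))) \<le> 8 * nsq x" .
  have g: "Re (cinner x (D x)) \<ge> 0" by (rule pos_ge0[OF assms(1)])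
  have "(nsq (D x))^2 \<le> (cmod (cinner x (D (D x))))^2"
    using h1 by (simp add: power_mono)
  also have "\<dots> \<le> Re (cinner x (D x)) * (8 * nsq x)"
    using h2 h3 g by (meson mult_left_mono order_trans)
  finally show ?thesis by (simp add: mult.commute mult.left_commute)
qed

lemma Yn_cauchy: "cauchy (\<lambda>n. Yn n x)"
proof -
  let ?a = "\<lambda>n. Re (cinner x (Yn n x))"
  have inc: "incseq ?a"
  proof (rule incseq_SucI)
    fix n
    have "Re (cinner x (Yn (Suc n) x - Yn n x)) \<ge> 0" using pc_ge0[OF pc_Ydiff1[of n]] by simp
    thus "?a n \<le> ?a (Suc n)" by (simp add: cinner_diff_right)
  qed
  have "bdd_above (range ?a)" by (rule bdd_aboveI[where M="nsq x"]) (auto simp: Re_Yn_le)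
  hence "?a \<longlonglongrightarrow> (SUP i. ?a i)" using LIMSEQ_incseq_SUP inc by blast
  hence cau: "Cauchy ?a" by (rule LIMSEQ_imp_Cauchy)
  have main: "cnorm (Yn m x - Yn n x) < e" if "e > 0" "\<forall>m\<ge>M. \<forall>n\<ge>M. norm (?a m - ?a n) < e^4 / (8 * nsq x + 1)"
      "n \<le> m" "m \<ge> M" "n \<ge> M" for e M m n
  proof -
    obtain k where m: "m = n + k" using \<open>n \<le> m\<close> le_Suc_ex by blast
    define D where "D = (\<lambda>y. Yn (n + k) y - Yn n y)"
    have pD: "positive_op D" unfolding D_def by (rule pc_pos[OF pc_Ydiff])
    have bD: "cnorm (D y) \<le> 2 * cnorm y" for y
      unfolding D_def using cnorm_diff_triangle[of "Yn (n + k) y" "Yn n y"] Yn_contr[of "n+k" y] Yn_contr[of n y]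
      by linarith
    have "(nsq (D x))^2 \<le> 8 * nsq x * Re (cinner x (D x))" by (rule key_est[OF pD bD])
    also have "Re (cinner x (D x)) = ?a m - ?a n" unfolding D_def m by (simp add: cinner_diff_right)
    also have "?a m - ?a n < e^4 / (8 * nsq x + 1)" using that(2) \<open>m \<ge> M\<close> \<open>n \<ge> M\<close> by fastforce
    hence "8 * nsq x * (?a m - ?a n) \<le> 8 * nsq x * (e^4 / (8 * nsq x + 1))"
      using less_imp_le by (intro mult_left_mono) simp_all
    also have "\<dots> < e^4"
    proof -
      have eq: "8 * nsq x * (e^4 / (8 * nsq x + 1)) = e^4 * (8 * nsq x / (8 * nsq x + 1))" by simp
      have pos: "8 * nsq x + 1 > 0" using nsq_ge0[of x] by linarith
      have "8 * nsq x / (8 * nsq x + 1) < 1" using pos by (simp add: divide_less_eq)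
      hence "e^4 * (8 * nsq x / (8 * nsq x + 1)) < e^4 * 1"
        using \<open>e > 0\<close> by (intro mult_strict_left_mono) simp_all
      thus ?thesis unfolding eq by simp
    qed
    finally have "(nsq (D x))^2 < e^4" .
    moreover have "(cnorm (D x))^4 = ((cnorm (D x))^2)^2"
      by (simp flip: power_mult)
    ultimately have "(cnorm (D x))^4 < e^4" by (simp add: cnorm_sq)
    hence "cnorm (D x) < e" using \<open>e > 0\<close> by (meson power_less_imp_less_base less_le)
    thus ?thesis unfolding D_def m .
  qed
  show ?thesis unfolding cauchy_def
  proof (intro allI impI)
    fix e :: real assume "e > 0"
    have pos: "8 * nsq x + 1 > 0" using nsq_ge0[of x] by linarith
    have "e^4 / (8 * nsq x + 1) > 0" using \<open>e > 0\<close> pos by (intro divide_pos_pos) simp_all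
    then obtain M where M: "\<forall>m\<ge>M. \<forall>n\<ge>M. norm (?a m - ?a n) < e^4 / (8 * nsq x + 1)"
      using CauchyD[OF cau] by blast
    show "\<exists>N. \<forall>m\<ge>N. \<forall>n\<ge>N. cnorm (Yn m x - Yn n x) < e"
    proof (intro exI allI impI)
      fix m n assume "m \<ge> M" "n \<ge> M"
      show "cnorm (Yn m x - Yn n x) < e"
      proof (cases "n \<le> m")
        case True thus ?thesis using main[OF \<open>e > 0\<close> M True \<open>m \<ge> M\<close> \<open>n \<ge> M\<close>] by simp
      next
        case False
        hence "cnorm (Yn n x - Yn m x) < e" using main[OF \<open>e > 0\<close> M _ \<open>n \<ge> M\<close> \<open>m \<ge> M\<close>] by simp
        thus ?thesis by (simp add: cnorm_diff_commute)
      qed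
    qed
  qed
qed

end



context sqrt_ctx begin

definition Y :: "'a \<Rightarrow> 'a" where "Y x = (SOME l. conv (\<lambda>n. Yn n x) l)"

lemma convY: "conv (\<lambda>n. Yn n x) (Y x)"
  unfolding Y_def using cauchy_conv[OF Yn_cauchy[of x]] by (rule someI_ex)

lemma Y_add: "Y (x + y) = Y x + Y y"
proof -
  have "conv (\<lambda>n. Yn n x + Yn n y) (Y x + Y y)" by (rule conv_add[OF convY convY])
  moreover have "(\<lambda>n. Yn n x + Yn n y) = (\<lambda>n. Yn n (x + y))"
    using bcl_add[OF bcl_Yn] by simp
  ultimately have "conv (\<lambda>n. Yn n (x + y)) (Y x + Y y)" by simp
  thus ?thesis using convY conv_unique by blast
qed

lemma Y_scale: "Y (scaleC a x) = scaleC a (Y x)"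
proof -
  have "conv (\<lambda>n. scaleC a (Yn n x)) (scaleC a (Y x))" by (rule conv_scaleC[OF convY])
  moreover have "(\<lambda>n. scaleC a (Yn n x)) = (\<lambda>n. Yn n (scaleC a x))"
    using bcl_scale[OF bcl_Yn] by simp
  ultimately have "conv (\<lambda>n. Yn n (scaleC a x)) (scaleC a (Y x))" by simp
  thus ?thesis using convY conv_unique by blast
qed

lemma Y_contr: "cnorm (Y x) \<le> cnorm x"
proof -
  have "(\<lambda>n. cnorm (Yn n x)) \<longlonglongrightarrow> cnorm (Y x)" by (rule conv_cnorm[OF convY])
  thus ?thesis using Yn_contr by (intro LIMSEQ_le_const2) auto
qed

lemma bclY: "bounded_clinear_op Y"
  unfolding bounded_clinear_op_def using Y_add Y_scale Y_contr
  by (metis mult_1)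

lemma saY: "selfadjoint_op Y"
  unfolding selfadjoint_op_def
proof (intro allI)
  fix x y
  have "(\<lambda>n. cinner (Yn n x) y) \<longlonglongrightarrow> cinner (Y x) y" by (rule conv_cinner_left[OF convY])
  moreover have "(\<lambda>n. cinner (Yn n x) y) = (\<lambda>n. cinner x (Yn n y))"
    using sa_sym[OF pc_sa[OF pc_Yn]] by simp
  moreover have "(\<lambda>n. cinner x (Yn n y)) \<longlonglongrightarrow> cinner x (Y y)" by (rule conv_cinner_right[OF convY])
  ultimately show "cinner (Y x) y = cinner x (Y y)" using LIMSEQ_unique by metis
qed

lemma Y_ge0: "Re (cinner x (Y x)) \<ge> 0"
proof -
  have "(\<lambda>n. Re (cinner x (Yn n x))) \<longlonglongrightarrow> Re (cinner x (Y x))"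
    by (rule tendsto_Re[OF conv_cinner_right[OF convY]])
  thus ?thesis using pc_ge0[OF pc_Yn] by (intro LIMSEQ_le_const) auto
qed

lemma posY: "positive_op Y" by (rule positive_opI[OF bclY saY Y_ge0])

lemma Y_eq: "Y x = scaleC (complex_of_real (1/2)) (C x + Y (Y x))"
proof -
  have c1: "conv (\<lambda>n. Yn (Suc n) x) (Y x)"
    using convY[of x] unfolding conv_def by (rule LIMSEQ_Suc)
  have c2: "conv (\<lambda>n. Yn n (Yn n x)) (Y (Y x))"
    unfolding conv_def
  proof (rule null_cmp)
    show "cnorm (Yn n (Yn n x) - Y (Y x)) \<le> cnorm (Yn n x - Y x) + cnorm (Yn n (Y x) - Y (Y x))" for n
    proof -
      have "Yn n (Yn n x) - Y (Y x) = Yn n (Yn n x - Y x) + (Yn n (Y x) - Y (Y x))"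
        using bcl_diff[OF bcl_Yn, of n "Yn n x" "Y x"] by simp
      hence "cnorm (Yn n (Yn n x) - Y (Y x)) \<le> cnorm (Yn n (Yn n x - Y x)) + cnorm (Yn n (Y x) - Y (Y x))"
        using cnorm_triangle by metis
      thus ?thesis using Yn_contr[of n "Yn n x - Y x"] by linarith
    qed
    show "(\<lambda>n. cnorm (Yn n x - Y x) + cnorm (Yn n (Y x) - Y (Y x))) \<longlonglongrightarrow> 0"
      using tendsto_add[OF convY[unfolded conv_def] convY[unfolded conv_def]] by simp
  qed simp
  have "conv (\<lambda>n. scaleC (complex_of_real (1/2)) (C x + Yn n (Yn n x)))
             (scaleC (complex_of_real (1/2)) (C x + Y (Y x)))"
    by (rule conv_scaleC[OF conv_add[OF conv_const c2]])
  moreover have "(\<lambda>n. scaleC (complex_of_real (1/2)) (C x + Yn n (Yn n x))) = (\<lambda>n. Yn (Suc n) x)"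
    by (simp add: Yn.simps)
  ultimately have "conv (\<lambda>n. Yn (Suc n) x) (scaleC (complex_of_real (1/2)) (C x + Y (Y x)))" by simp
  thus ?thesis using c1 conv_unique by blast
qed

lemma YY: "Y (Y x) = scaleC 2 (Y x) - C x"
proof -
  have "scaleC 2 (Y x) = scaleC 2 (scaleC (complex_of_real (1/2)) (C x + Y (Y x)))"
    using Y_eq[of x] by simp
  also have "\<dots> = C x + Y (Y x)" by (simp add: scaleC_scaleC scaleC_one)
  finally show ?thesis by simp
qed

lemma Y_comm:
  assumes b: "bounded_clinear_op S" and c: "\<And>x. S (A x) = A (S x)"
  shows "S (Y x) = Y (S x)"
proof -
  have cC: "S (C x) = C (S x)" for x
    unfolding C_def using bcl_diff[OF b] c by simp
  have cn: "S (Yn n x) = Yn n (S x)" for n x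
  proof (induction n arbitrary: x)
    case 0 thus ?case using bcl_zero[OF b] by (simp add: Yn.simps)
  next
    case (Suc n) thus ?case using bcl_add[OF b] bcl_scale[OF b] cC by (simp add: Yn.simps)
  qed
  have "conv (\<lambda>n. S (Yn n x)) (S (Y x))" by (rule bcl_conv[OF b convY])
  hence "conv (\<lambda>n. Yn n (S x)) (S (Y x))" using cn by simp
  thus ?thesis using convY conv_unique by blast
qed

definition R :: "'a \<Rightarrow> 'a" where "R x = x - Y x"

lemma R_eq: "R = (\<lambda>x. x - Y x)" by (rule ext) (simp add: R_def)

lemma bclR: "bounded_clinear_op R"
  unfolding R_eq by (rule bcl_diffop[OF bcl_id bclY])

lemma saR: "selfadjoint_op R"
  unfolding R_eq by (rule sa_diffop[OF sa_id saY])

lemma R_ge0: "Re (cinner x (R x)) \<ge> 0"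
proof -
  have "Re (cinner x (Y x)) \<le> cmod (cinner x (Y x))" by (rule complex_Re_le_cmod)
  also have "\<dots> \<le> cnorm x * cnorm (Y x)" by (rule cauchy_schwarz)
  also have "\<dots> \<le> cnorm x * cnorm x" using Y_contr by (simp add: mult_left_mono)
  finally have "Re (cinner x (Y x)) \<le> nsq x" by (simp add: cnorm_nsq)
  thus ?thesis by (simp add: R_def cinner_diff_right nsq_def)
qed

lemma posR: "positive_op R" by (rule positive_opI[OF bclR saR R_ge0])

lemma RR: "R (R x) = A x"
proof -
  have "R (R x) = (x - Y x) - (Y x - Y (Y x))"
    unfolding R_def using bcl_diff[OF bclY] by simp
  also have "\<dots> = x - scaleC 2 (Y x) + Y (Y x)"
  proof -
    have "scaleC 2 (Y x) = Y x + Y x"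
      using scaleC_add_left[of 1 1 "Y x"] by (simp add: scaleC_one)
    thus ?thesis by (simp add: algebra_simps)
  qed
  also have "\<dots> = x - C x" using YY by (simp add: algebra_simps)
  also have "\<dots> = A x" by (simp add: C_def)
  finally show ?thesis .
qed

lemma R_comm:
  assumes "bounded_clinear_op S" "\<And>x. S (A x) = A (S x)"
  shows "S (R x) = R (S x)"
  unfolding R_def using bcl_diff[OF assms(1)] Y_comm[OF assms] by simp

end

lemma sqrt_unique:
  fixes R Q :: "'a::complex_inner \<Rightarrow> 'a"
  assumes pR: "positive_op R" and pQ: "positive_op Q"
    and sq: "\<And>x. R (R x) = Q (Q x)" and cm: "\<And>x. R (Q x) = Q (R x)"
  shows "R = Q"
proof (rule ext)
  fix x
  have bR: "bounded_clinear_op R" and bQ: "bounded_clinear_op Q" using pR pQ by (auto simp: positive_op_def)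
  have sR: "selfadjoint_op R" and sQ: "selfadjoint_op Q" using pR pQ by (auto simp: positive_op_def)
  define T where "T = (\<lambda>y. R y - Q y)"
  define u where "u = T x"
  have e1: "R (T x) = R (R x) - R (Q x)" unfolding T_def by (rule bcl_diff[OF bR])
  have e2: "Q (T x) = Q (R x) - Q (Q x)" unfolding T_def by (rule bcl_diff[OF bQ])
  have "R (T x) + Q (T x) = 0"
    unfolding e1 e2 sq[of x] cm[of x] by simp
  hence "cinner u (R u) + cinner u (Q u) = 0" unfolding u_def by (simp flip: cinner_add_right)
  hence "Re (cinner u (R u)) + Re (cinner u (Q u)) = 0" by (metis plus_complex.simps(1) zero_complex.simps(1))
  hence "Re (cinner u (R u)) = 0" "Re (cinner u (Q u)) = 0"
    using pos_ge0[OF pR, of u] pos_ge0[OF pQ, of u] by linarith+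
  hence "R u = 0" "Q u = 0" using pos_zero pR pQ by blast+
  hence Tu: "T u = 0" unfolding T_def by simp
  have "cinner (T x) (T x) = cinner x (T (T x))"
    unfolding T_def using sa_sym[OF sR] sa_sym[OF sQ]
    by (simp add: cinner_diff_left cinner_diff_right bcl_diff[OF bR] bcl_diff[OF bQ])
  hence "cinner (T x) (T x) = 0" using Tu unfolding u_def by simp
  hence "T x = 0" by (simp add: cinner_eq_zero_iff)
  thus "R x = Q x" unfolding T_def by simp
qed

lemma op_sqrt_props:
  fixes A :: "'a::chilbert \<Rightarrow> 'a"
  assumes "positive_op A" "op_le A id"
  shows "positive_op (op_sqrt A) \<and> (\<forall>x. op_sqrt A (op_sqrt A x) = A x)"
proof -
  interpret sqrt_ctx A using assms by unfold_locales
  have "op_sqrt A = R"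
    unfolding op_sqrt_def
  proof (rule the_equality)
    show "positive_op R \<and> (\<forall>x. R (R x) = A x)" using posR RR by blast
    fix Q assume Q: "positive_op Q \<and> (\<forall>x. Q (Q x) = A x)"
    have "Q (A x) = A (Q x)" for x using Q by metis
    hence "Q (R x) = R (Q x)" for x using R_comm[OF pos_bcl] Q by blast
    thus "Q = R" using sqrt_unique[of Q R] Q posR RR by metis
  qed
  thus ?thesis using posR RR by simp
qed



lemma cinner_sum_left: "cinner (\<Sum>i\<in>I. g i) (w::'a::complex_inner) = (\<Sum>i\<in>I. cinner (g i) w)"
  by (induction I rule: infinite_finite_induct) (simp_all add: cinner_add_left)

lemma cinner_sum_right: "cinner (w::'a::complex_inner) (\<Sum>i\<in>I. g i) = (\<Sum>i\<in>I. cinner w (g i))"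
  by (induction I rule: infinite_finite_induct) (simp_all add: cinner_add_right)

lemma bcl_sum: "bounded_clinear_op E \<Longrightarrow> E (\<Sum>i\<in>I. g i) = (\<Sum>i\<in>I. E (g i))"
  by (induction I rule: infinite_finite_induct) (simp_all add: bcl_add bcl_zero)

lemma gram:
  fixes f :: "'x \<Rightarrow> 'a::complex_inner"
  assumes "bounded_clinear_op E"
  shows "(\<Sum>i<n. \<Sum>j<n. cnj (c i) * c j * cinner (f (xs i)) (E (f (xs j))))
       = cinner (\<Sum>i<n. scaleC (c i) (f (xs i))) (E (\<Sum>j<n. scaleC (c j) (f (xs j))))"
proof -
  have "cinner (\<Sum>i<n. scaleC (c i) (f (xs i))) (E (\<Sum>j<n. scaleC (c j) (f (xs j))))
      = (\<Sum>i<n. cnj (c i) * (\<Sum>j<n. c j * cinner (f (xs i)) (E (f (xs j)))))"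
    by (simp add: bcl_sum[OF assms] bcl_scale[OF assms] cinner_sum_left cinner_sum_right
        cinner_scaleC_left cinner_scaleC_right)
      (simp add: sum_distrib_left, subst sum.swap, simp add: mult.left_commute)
  also have "\<dots> = (\<Sum>i<n. \<Sum>j<n. cnj (c i) * c j * cinner (f (xs i)) (E (f (xs j))))"
    by (simp add: sum_distrib_left mult.assoc)
  finally show ?thesis by simp
qed

lemma pd_from_pos:
  fixes f :: "'x \<Rightarrow> 'a::complex_inner"
  assumes "positive_op E"
  shows "pd_kernel (\<lambda>x y. cinner (f x) (E (f y)))"
  unfolding pd_kernel_def
proof (intro allI)
  fix n and xs :: "nat \<Rightarrow> 'x" and c :: "nat \<Rightarrow> complex"
  define v where "v = (\<Sum>i<n. scaleC (c i) (f (xs i)))"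
  have "(\<Sum>i<n. \<Sum>j<n. cnj (c i) * c j * cinner (f (xs i)) (E (f (xs j)))) = cinner v (E v)"
    unfolding v_def by (rule gram[OF pos_bcl[OF assms]])
  thus "(\<Sum>i<n. \<Sum>j<n. cnj (c i) * c j * cinner (f (xs i)) (E (f (xs j)))) \<in> \<real> \<and>
        Re (\<Sum>i<n. \<Sum>j<n. cnj (c i) * c j * cinner (f (xs i)) (E (f (xs j)))) \<ge> 0"
    using sa_real[OF pos_sa[OF assms]] pos_ge0[OF assms] by simp
qed

section \<open>The easy direction\<close>

lemma reverse_dir:
  fixes K L :: "'x \<Rightarrow> 'x \<Rightarrow> complex" and \<psi> :: "'x \<Rightarrow> 'l::chilbert"
  assumes HL: "in_HS L \<psi>" and pB: "positive_op B" and lB: "op_le B id"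
    and K: "\<And>x y. K x y = cinner (op_sqrt B (\<psi> x)) (op_sqrt B (\<psi> y))"
  shows "kernel_le K L"
proof -
  define R where "R = op_sqrt B"
  have pR: "positive_op R" and RR: "\<And>x. R (R x) = B x"
    using op_sqrt_props[OF pB lB] unfolding R_def by auto
  define E where "E = (\<lambda>v. id v - B v)"
  have pE: "positive_op E" using lB unfolding op_le_def E_def .
  have "L x y - K x y = cinner (\<psi> x) (E (\<psi> y))" for x y
  proof -
    have "K x y = cinner (\<psi> x) (R (R (\<psi> y)))"
      unfolding K R_def[symmetric] by (rule sa_sym[OF pos_sa[OF pR]])
    hence "K x y = cinner (\<psi> x) (B (\<psi> y))" using RR by simp
    moreover have "L x y = cinner (\<psi> x) (\<psi> y)" using HL unfolding in_HS_def by simp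
    ultimately show ?thesis unfolding E_def by (simp add: cinner_diff_right)
  qed
  hence "(\<lambda>x y. L x y - K x y) = (\<lambda>x y. cinner (\<psi> x) (E (\<psi> y)))" by (intro ext) simp
  thus ?thesis unfolding kernel_le_def using pd_from_pos[OF pE] by simp
qed

section \<open>Projection theorem\<close>

lemma orth_self_zero: "cinner v v = 0 \<Longrightarrow> v = (0::'a::complex_inner)"
  by (simp add: cinner_eq_zero_iff)

lemma parallelogram:
  "nsq (a - b) + nsq (a + b) = 2 * nsq a + 2 * nsq (b::'a::complex_inner)"
  by (simp add: nsq_add nsq_diff)

lemma projection:
  fixes N :: "'a::chilbert set"
  assumes z: "0 \<in> N" and ad: "\<And>u v. u \<in> N \<Longrightarrow> v \<in> N \<Longrightarrow> u + v \<in> N"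
    and sc: "\<And>a u. u \<in> N \<Longrightarrow> scaleC a u \<in> N"
    and cl: "\<And>X u. (\<And>n. X n \<in> N) \<Longrightarrow> conv X u \<Longrightarrow> u \<in> N"
  shows "\<exists>p\<in>N. \<forall>v\<in>N. cinner v (w - p) = 0"
proof -
  define d where "d = Inf ((\<lambda>v. nsq (w - v)) ` N)"
  have bdd: "bdd_below ((\<lambda>v. nsq (w - v)) ` N)" by (rule bdd_belowI[where m=0]) auto
  have dle: "d \<le> nsq (w - v)" if "v \<in> N" for v
    unfolding d_def using bdd that by (simp add: cInf_lower)
  have ex: "\<exists>v\<in>N. nsq (w - v) < d + 1 / (real n + 1)" for n
  proof (rule ccontr)
    assume "\<not> ?thesis"
    hence "\<forall>v\<in>N. d + 1 / (real n + 1) \<le> nsq (w - v)" by auto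
    hence "d + 1 / (real n + 1) \<le> d" unfolding d_def using z by (intro cInf_greatest) auto
    thus False by (simp add: add_pos_nonneg)
  qed
  obtain s where s: "\<And>n. s n \<in> N" "\<And>n. nsq (w - s n) < d + 1 / (real n + 1)"
    using ex by metis
  have mid: "nsq (s m - s n) \<le> 2 / (real m + 1) + 2 / (real n + 1)" for m n
  proof -
    have "scaleC (1/2) (s m + s n) \<in> N" using s(1) ad sc by blast
    hence d4: "4 * d \<le> 4 * nsq (w - scaleC (1/2) (s m + s n))" using dle by simp
    have "(w - s m) + (w - s n) = scaleC 2 (w - scaleC (1/2) (s m + s n))"
    proof -
      have "scaleC 2 (w - scaleC (1/2) (s m + s n)) = scaleC 2 w - (s m + s n)"
        by (simp add: scaleC_diff_right scaleC_scaleC scaleC_one)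
      also have "scaleC 2 w = w + w" using scaleC_add_left[of 1 1 w] by (simp add: scaleC_one)
      finally show ?thesis by (simp add: algebra_simps)
    qed
    hence "nsq ((w - s m) + (w - s n)) = 4 * nsq (w - scaleC (1/2) (s m + s n))"
      by (simp add: nsq_scaleC)
    moreover have "nsq (s n - s m) + nsq ((w - s m) + (w - s n))
        = 2 * nsq (w - s m) + 2 * nsq (w - s n)"
    proof -
      have eq: "(w - s m) - (w - s n) = s n - s m" by simp
      show ?thesis using parallelogram[of "w - s m" "w - s n"] unfolding eq .
    qed
    ultimately have "nsq (s n - s m) \<le> 2 * nsq (w - s m) + 2 * nsq (w - s n) - 4 * d"
      using d4 by linarith
    also have "\<dots> \<le> 2 / (real m + 1) + 2 / (real n + 1)"
      using s(2)[of m] s(2)[of n] by simp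
    finally show ?thesis by (simp add: nsq_diff_commute)
  qed
  have "cauchy s" unfolding cauchy_def
  proof (intro allI impI)
    fix e :: real assume "e > 0"
    obtain M :: nat where M: "4 / e^2 < real M" using reals_Archimedean2 by blast
    have "cnorm (s m - s n) < e" if "m \<ge> M" "n \<ge> M" for m n
    proof -
      have e2: "e^2 > 0" using \<open>e > 0\<close> by simp
      have "2 / (real m + 1) \<le> 2 / (real M + 1)" using that by (simp add: frac_le)
      moreover have "2 / (real n + 1) \<le> 2 / (real M + 1)" using that by (simp add: frac_le)
      moreover have "4 / (real M + 1) < e^2"
      proof -
        have "4 < e^2 * real M" using M e2 by (simp add: divide_less_eq mult.commute)
        also have "\<dots> < e^2 * (real M + 1)" using e2 by simp
        finally show ?thesis by (simp add: divide_less_eq)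
      qed
      ultimately have "nsq (s m - s n) < e^2" using mid[of m n] by linarith
      hence "(cnorm (s m - s n))^2 < e^2" by (simp add: cnorm_sq)
      thus ?thesis using \<open>e > 0\<close> by (meson power_less_imp_less_base less_le)
    qed
    thus "\<exists>N. \<forall>m\<ge>N. \<forall>n\<ge>N. cnorm (s m - s n) < e" by blast
  qed
  then obtain p where p: "conv s p" using cauchy_conv by blast
  have pN: "p \<in> N" by (rule cl[OF s(1) p])
  have "nsq (w - p) \<le> d"
  proof -
    have "conv (\<lambda>n. w - s n) (w - p)" by (rule conv_diff[OF conv_const p])
    hence l1: "(\<lambda>n. nsq (w - s n)) \<longlonglongrightarrow> nsq (w - p)" by (rule conv_nsq)
    have l2: "(\<lambda>n. d + 1 / (real n + 1)) \<longlonglongrightarrow> d + 0"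
    proof (intro tendsto_add tendsto_const)
      have "(\<lambda>n. 1 / (real n + 1)) = (\<lambda>n. inverse (real (Suc n)))"
        by (simp add: inverse_eq_divide add.commute)
      thus "(\<lambda>n. 1 / (real n + 1)) \<longlonglongrightarrow> 0" using LIMSEQ_inverse_real_of_nat by simp
    qed
    show ?thesis using LIMSEQ_le[OF l1 l2] s(2) less_imp_le by auto
  qed
  hence pmin: "nsq (w - p) \<le> nsq (w - v)" if "v \<in> N" for v using dle[OF that] by linarith
  have "cinner v (w - p) = 0" if vN: "v \<in> N" for v
  proof (cases "v = 0")
    case True thus ?thesis by simp
  next
    case False
    define e where "e = w - p"
    define a where "a = cinner v e"
    have nv: "nsq v > 0" using False nsq_ge0[of v] nsq_eq0[of v] by linarith
    define t where "t = complex_of_real (1 / nsq v) * a"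
    have "p + scaleC t v \<in> N" using ad sc pN vN by blast
    hence "nsq e \<le> nsq (e - scaleC t v)" using pmin unfolding e_def by (simp add: algebra_simps)
    also have "nsq (e - scaleC t v) = nsq e + (cmod t)^2 * nsq v - 2 * Re (t * cinner e v)"
      by (simp add: nsq_diff nsq_scaleC cinner_scaleC_right)
    also have "cinner e v = cnj a" unfolding a_def by (rule cinner_commute)
    also have "Re (t * cnj a) = (cmod a)^2 / nsq v"
    proof -
      have "t * cnj a = complex_of_real (1 / nsq v) * (a * cnj a)" by (simp add: t_def)
      also have "a * cnj a = complex_of_real ((cmod a)^2)" by (metis complex_norm_square of_real_power)
      finally show ?thesis by simp
    qed
    also have "(cmod t)^2 * nsq v = (cmod a)^2 / nsq v"
    proof -
      have "cmod t = cmod a / nsq v" using nv by (simp add: t_def norm_mult norm_divide)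
      thus ?thesis using nv by (simp add: power2_eq_square)
    qed
    finally have "(cmod a)^2 / nsq v \<le> 0" by simp
    hence "(cmod a)^2 \<le> 0" using nv by (simp add: divide_le_0_iff)
    hence "a = 0" by simp
    thus ?thesis unfolding a_def e_def .
  qed
  thus ?thesis using pN by blast
qed

section \<open>Riesz representation\<close>

lemma riesz:
  fixes f :: "'a::chilbert \<Rightarrow> complex"
  assumes fadd: "\<And>x y. f (x + y) = f x + f y" and fsc: "\<And>a x. f (scaleC a x) = a * f x"
    and fb: "\<And>x. cmod (f x) \<le> Kf * cnorm x"
  shows "\<exists>z. \<forall>v. f v = cinner z v"
proof (cases "\<forall>v. f v = 0")
  case True thus ?thesis by (intro exI[of _ 0]) simp
next
  case False
  then obtain w where fw: "f w \<noteq> 0" by blast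
  have f0: "f 0 = 0" using fadd[of 0 0] by simp
  have fdiff: "f (x - y) = f x - f y" for x y using fadd[of "x - y" y] by simp
  define N where "N = {v. f v = 0}"
  have "\<exists>p\<in>N. \<forall>v\<in>N. cinner v (w - p) = 0"
  proof (rule projection)
    show "0 \<in> N" using f0 by (simp add: N_def)
    show "u + v \<in> N" if "u \<in> N" "v \<in> N" for u v using that fadd by (simp add: N_def)
    show "scaleC a u \<in> N" if "u \<in> N" for a u using that fsc by (simp add: N_def)
    show "u \<in> N" if X: "\<And>n. X n \<in> N" and c: "conv X u" for X u
    proof -
      have "(\<lambda>n. cmod (f u)) \<longlonglongrightarrow> 0"
      proof (rule null_cmp)
        show "cmod (f u) \<le> Kf * cnorm (X n - u)" for n
          using fb[of "X n - u"] fdiff[of "X n" u] X[of n] by (simp add: N_def norm_minus_commute)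
        show "(\<lambda>n. Kf * cnorm (X n - u)) \<longlonglongrightarrow> 0"
          using tendsto_mult_right_zero[OF c[unfolded conv_def], where c=Kf] by simp
      qed simp
      hence "cmod (f u) = 0" by (simp add: LIMSEQ_const_iff)
      thus ?thesis by (simp add: N_def)
    qed
  qed
  then obtain p where pN: "p \<in> N" and orth: "\<And>v. v \<in> N \<Longrightarrow> cinner v (w - p) = 0" by blast
  define e where "e = w - p"
  have fe: "f e = f w" unfolding e_def using fdiff pN by (simp add: N_def)
  hence "e \<noteq> 0" using fw f0 by auto
  hence ne: "nsq e > 0" using nsq_ge0[of e] nsq_eq0[of e] by linarith
  define z where "z = scaleC (cnj (f e) / complex_of_real (nsq e)) e"
  have "f v = cinner z v" for v
  proof -
    define g where "g = scaleC (f e) v - scaleC (f v) e"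
    have "f g = 0" unfolding g_def using fdiff fsc by (simp add: mult.commute)
    hence "cinner g e = 0" using orth unfolding e_def N_def by simp
    hence "cinner e g = 0" using cinner_commute[of e g] by simp
    hence "f e * cinner e v = f v * cinner e e"
      unfolding g_def by (simp add: cinner_diff_right cinner_scaleC_right)
    hence "f e * cinner e v = f v * complex_of_real (nsq e)" by (simp add: cinner_self_real)
    hence "f v = f e * cinner e v / complex_of_real (nsq e)" using \<open>e \<noteq> 0\<close> by (simp add: eq_divide_eq)
    also have "\<dots> = cinner z v" unfolding z_def by (simp add: cinner_scaleC_left)
    finally show ?thesis .
  qed
  thus ?thesis by blast
qed



definition lin :: "('x \<Rightarrow> 'a::complex_inner) \<Rightarrow> (complex \<times> 'x) list \<Rightarrow> 'a" where
  "lin f cs = sum_list (map (\<lambda>p. scaleC (fst p) (f (snd p))) cs)"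

definition scl :: "complex \<Rightarrow> (complex \<times> 'x) list \<Rightarrow> (complex \<times> 'x) list" where
  "scl a cs = map (\<lambda>p. (a * fst p, snd p)) cs"

lemma lin_Nil[simp]: "lin f [] = 0" by (simp add: lin_def)

lemma lin_append: "lin f (cs @ ds) = lin f cs + lin f ds" by (simp add: lin_def)

lemma lin_single: "lin f [(1, x)] = f x" by (simp add: lin_def scaleC_one)

lemma lin_scl: "lin f (scl a cs) = scaleC a (lin f cs)"
  by (induction cs) (simp_all add: lin_def scl_def scaleC_add_right scaleC_scaleC)

lemma lin_diff: "lin f (cs @ scl (-1) ds) = lin f cs - lin f ds"
  by (simp add: lin_append lin_scl scaleC_minus_left scaleC_one)

lemma lin_sum: "lin f cs = (\<Sum>i<length cs. scaleC (fst (cs ! i)) (f (snd (cs ! i))))"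
  by (simp add: lin_def sum_list_sum_nth atLeast0LessThan)

section \<open>The forward direction\<close>

locale fwd =
  fixes K L :: "'x \<Rightarrow> 'x \<Rightarrow> complex" and \<phi> :: "'x \<Rightarrow> 'k::chilbert" and \<psi> :: "'x \<Rightarrow> 'l::chilbert"
  assumes HK: "in_HS K \<phi>" and HL: "in_HS L \<psi>" and le: "kernel_le K L"
begin

lemma key_nsq: "nsq (lin \<phi> cs) \<le> nsq (lin \<psi> cs)"
proof -
  define n where "n = length cs"
  define xs where "xs = (\<lambda>i. snd (cs ! i))"
  define c where "c = (\<lambda>i. fst (cs ! i))"
  have pd: "Re (\<Sum>i<n. \<Sum>j<n. cnj (c i) * c j * (L (xs i) (xs j) - K (xs i) (xs j))) \<ge> 0"
    using le unfolding kernel_le_def pd_kernel_def by blast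
  have split: "(\<Sum>i<n. \<Sum>j<n. cnj (c i) * c j * (L (xs i) (xs j) - K (xs i) (xs j)))
      = (\<Sum>i<n. \<Sum>j<n. cnj (c i) * c j * L (xs i) (xs j))
      - (\<Sum>i<n. \<Sum>j<n. cnj (c i) * c j * K (xs i) (xs j))"
    by (simp add: right_diff_distrib sum_subtractf)
  have gL: "(\<Sum>i<n. \<Sum>j<n. cnj (c i) * c j * L (xs i) (xs j)) = cinner (lin \<psi> cs) (lin \<psi> cs)"
    using gram[OF bcl_id, of c \<psi> xs n] HL unfolding in_HS_def lin_sum n_def c_def xs_def by simp
  have gK: "(\<Sum>i<n. \<Sum>j<n. cnj (c i) * c j * K (xs i) (xs j)) = cinner (lin \<phi> cs) (lin \<phi> cs)"
    using gram[OF bcl_id, of c \<phi> xs n] HK unfolding in_HS_def lin_sum n_def c_def xs_def by simp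
  show ?thesis using pd unfolding split gL gK by (simp add: nsq_def)
qed

lemma key: "cnorm (lin \<phi> cs) \<le> cnorm (lin \<psi> cs)"
  using key_nsq by (simp add: cnorm_nsq)

lemma key_diff: "cnorm (lin \<phi> a - lin \<phi> b) \<le> cnorm (lin \<psi> a - lin \<psi> b)"
  using key[of "a @ scl (-1) b"] by (simp add: lin_diff)

definition G :: "'l \<Rightarrow> 'k \<Rightarrow> bool" where
  "G u w \<longleftrightarrow> (\<exists>s. conv (\<lambda>n. lin \<psi> (s n)) u \<and> conv (\<lambda>n. lin \<phi> (s n)) w)"

definition M :: "'l set" where
  "M = {u. \<exists>s. conv (\<lambda>n. lin \<psi> (s n)) u}"

lemma G_exists: "u \<in> M \<Longrightarrow> \<exists>w. G u w"
proof -
  assume "u \<in> M"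
  then obtain s where s: "conv (\<lambda>n. lin \<psi> (s n)) u" unfolding M_def by blast
  have c: "cauchy (\<lambda>n. lin \<psi> (s n))" by (rule conv_cauchy[OF s])
  have "cauchy (\<lambda>n. lin \<phi> (s n))" unfolding cauchy_def
  proof (intro allI impI)
    fix e :: real assume "e > 0"
    then obtain N where N: "\<forall>m\<ge>N. \<forall>n\<ge>N. cnorm (lin \<psi> (s m) - lin \<psi> (s n)) < e"
      using c unfolding cauchy_def by blast
    show "\<exists>N. \<forall>m\<ge>N. \<forall>n\<ge>N. cnorm (lin \<phi> (s m) - lin \<phi> (s n)) < e"
      using N key_diff order_le_less_trans by blast
  qed
  then obtain w where "conv (\<lambda>n. lin \<phi> (s n)) w" using cauchy_conv by blast
  thus ?thesis using s unfolding G_def by blast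
qed

lemma G_M: "G u w \<Longrightarrow> u \<in> M"
  unfolding G_def M_def by blast

lemma G_unique: "G u w \<Longrightarrow> G u w' \<Longrightarrow> w = w'"
proof -
  assume "G u w" "G u w'"
  then obtain s s' where s: "conv (\<lambda>n. lin \<psi> (s n)) u" "conv (\<lambda>n. lin \<phi> (s n)) w"
    and s': "conv (\<lambda>n. lin \<psi> (s' n)) u" "conv (\<lambda>n. lin \<phi> (s' n)) w'"
    unfolding G_def by blast
  have l1: "(\<lambda>n. cnorm (lin \<psi> (s n) - lin \<psi> (s' n))) \<longlonglongrightarrow> cnorm (u - u)"
    by (rule conv_cnorm[OF conv_diff[OF s(1) s'(1)]])
  have l2: "(\<lambda>n. cnorm (lin \<phi> (s n) - lin \<phi> (s' n))) \<longlonglongrightarrow> cnorm (w - w')"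
    by (rule conv_cnorm[OF conv_diff[OF s(2) s'(2)]])
  have "cnorm (w - w') \<le> cnorm (u - u)"
    by (rule LIMSEQ_le[OF l2 l1]) (use key_diff in blast)
  hence "cnorm (w - w') = 0" using cnorm_ge0[of "w - w'"] by simp
  thus ?thesis by simp
qed

lemma G_bound: "G u w \<Longrightarrow> cnorm w \<le> cnorm u"
proof -
  assume "G u w"
  then obtain s where s: "conv (\<lambda>n. lin \<psi> (s n)) u" "conv (\<lambda>n. lin \<phi> (s n)) w"
    unfolding G_def by blast
  show ?thesis by (rule LIMSEQ_le[OF conv_cnorm[OF s(2)] conv_cnorm[OF s(1)]]) (use key in blast)
qed

lemma G_add: "G u w \<Longrightarrow> G u' w' \<Longrightarrow> G (u + u') (w + w')"
proof -
  assume "G u w" "G u' w'"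
  then obtain s s' where s: "conv (\<lambda>n. lin \<psi> (s n)) u" "conv (\<lambda>n. lin \<phi> (s n)) w"
    and s': "conv (\<lambda>n. lin \<psi> (s' n)) u'" "conv (\<lambda>n. lin \<phi> (s' n)) w'"
    unfolding G_def by blast
  have "conv (\<lambda>n. lin \<psi> (s n @ s' n)) (u + u')"
    using conv_add[OF s(1) s'(1)] by (simp add: lin_append)
  moreover have "conv (\<lambda>n. lin \<phi> (s n @ s' n)) (w + w')"
    using conv_add[OF s(2) s'(2)] by (simp add: lin_append)
  ultimately show ?thesis unfolding G_def by (intro exI[of _ "\<lambda>n. s n @ s' n"]) simp
qed

lemma G_scale: "G u w \<Longrightarrow> G (scaleC a u) (scaleC a w)"
proof -
  assume "G u w"
  then obtain s where s: "conv (\<lambda>n. lin \<psi> (s n)) u" "conv (\<lambda>n. lin \<phi> (s n)) w"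
    unfolding G_def by blast
  have "conv (\<lambda>n. lin \<psi> (scl a (s n))) (scaleC a u)"
    using conv_scaleC[OF s(1)] by (simp add: lin_scl)
  moreover have "conv (\<lambda>n. lin \<phi> (scl a (s n))) (scaleC a w)"
    using conv_scaleC[OF s(2)] by (simp add: lin_scl)
  ultimately show ?thesis unfolding G_def by (intro exI[of _ "\<lambda>n. scl a (s n)"]) simp
qed

lemma G_gen: "G (\<psi> x) (\<phi> x)"
  unfolding G_def by (intro exI[of _ "\<lambda>n. [(1, x)]"]) (simp add: lin_single)

lemma M_zero: "0 \<in> M"
  unfolding M_def by (intro CollectI exI[of _ "\<lambda>n. []"]) simp

lemma M_add: "u \<in> M \<Longrightarrow> v \<in> M \<Longrightarrow> u + v \<in> M"
  using G_exists G_add G_M by metis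

lemma M_scale: "u \<in> M \<Longrightarrow> scaleC a u \<in> M"
  using G_exists G_scale G_M by metis

lemma M_diff: "u \<in> M \<Longrightarrow> v \<in> M \<Longrightarrow> u - v \<in> M"
proof -
  assume "u \<in> M" "v \<in> M"
  hence "u + scaleC (-1) v \<in> M" using M_add M_scale by blast
  thus ?thesis by (simp add: scaleC_minus_left scaleC_one)
qed

lemma M_closed:
  assumes X: "\<And>n. X n \<in> M" and c: "conv X u" shows "u \<in> M"
proof -
  have "\<forall>n. \<exists>s. conv (\<lambda>k. lin \<psi> (s k)) (X n)" using X unfolding M_def by blast
  then obtain S where S: "\<And>n. conv (\<lambda>k. lin \<psi> (S n k)) (X n)" by metis
  have "\<exists>k. cnorm (lin \<psi> (S n k) - X n) < 1 / (real n + 1)" for n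
  proof -
    have "\<exists>k0. \<forall>k\<ge>k0. norm (cnorm (lin \<psi> (S n k) - X n) - 0) < 1 / (real n + 1)"
    proof -
      have pos: "1 / (real n + 1) > 0" by simp
      show ?thesis using S[of n] pos unfolding conv_def LIMSEQ_iff by blast
    qed
    thus ?thesis by auto
  qed
  then obtain k where k: "\<And>n. cnorm (lin \<psi> (S n (k n)) - X n) < 1 / (real n + 1)" by metis
  have "conv (\<lambda>n. lin \<psi> (S n (k n))) u" unfolding conv_def
  proof (rule null_cmp)
    show "cnorm (lin \<psi> (S n (k n)) - u) \<le> 1 / (real n + 1) + cnorm (X n - u)" for n
      using cnorm_triangle3[of "lin \<psi> (S n (k n))" u "X n"] k[of n] by linarith
    have "(\<lambda>n. 1 / (real n + 1)) \<longlonglongrightarrow> 0"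
    proof -
      have "(\<lambda>n. 1 / (real n + 1)) = (\<lambda>n. inverse (real (Suc n)))"
        by (simp add: inverse_eq_divide add.commute)
      thus ?thesis using LIMSEQ_inverse_real_of_nat by simp
    qed
    thus "(\<lambda>n. 1 / (real n + 1) + cnorm (X n - u)) \<longlonglongrightarrow> 0"
      using tendsto_add[OF _ c[unfolded conv_def]] by simp
  qed simp
  thus ?thesis unfolding M_def by (intro CollectI exI[of _ "\<lambda>n. S n (k n)"])
qed

definition P :: "'l \<Rightarrow> 'l" where
  "P u = (SOME p. p \<in> M \<and> (\<forall>v\<in>M. cinner v (u - p) = 0))"

lemma P_props: "P u \<in> M \<and> (\<forall>v\<in>M. cinner v (u - P u) = 0)"
proof -
  have "\<exists>p\<in>M. \<forall>v\<in>M. cinner v (u - p) = 0"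
    by (rule projection[OF M_zero M_add M_scale M_closed])
  hence "\<exists>p. p \<in> M \<and> (\<forall>v\<in>M. cinner v (u - p) = 0)" by blast
  thus ?thesis unfolding P_def by (rule someI_ex)
qed

lemma PM: "P u \<in> M" using P_props by blast
lemma P_orth: "v \<in> M \<Longrightarrow> cinner v (u - P u) = 0" using P_props by blast

lemma M_orth_zero: "m \<in> M \<Longrightarrow> (\<And>v. v \<in> M \<Longrightarrow> cinner v m = 0) \<Longrightarrow> m = 0"
  by (metis orth_self_zero)

lemma cinner_lin3: "cinner v (a + b - c) = cinner v a + cinner v b - cinner (v::'a::complex_inner) c"
  by (simp add: cinner_add_right cinner_diff_right)

lemma cinner_lin2: "cinner v (scaleC s a - c) = s * cinner v a - cinner (v::'a::complex_inner) c"
  by (simp add: cinner_scaleC_right cinner_diff_right)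

lemma P_add: "P (u + u') = P u + P u'"
proof -
  define m where "m = P (u + u') - P u - P u'"
  have mM: "m \<in> M" unfolding m_def using PM M_diff by blast
  have eq: "m = (u - P u) + (u' - P u') - (u + u' - P (u + u'))" unfolding m_def by (simp add: algebra_simps)
  have "cinner v m = 0" if "v \<in> M" for v
  proof -
    have o1: "cinner v (u - P u) = 0" "cinner v (u' - P u') = 0" "cinner v (u + u' - P (u + u')) = 0"
      using P_orth[OF that] by blast+
    show ?thesis unfolding eq
      by (subst cinner_lin3[of v "u - P u" "u' - P u'" "u + u' - P (u + u')"]) (simp only: o1, simp)
  qed
  hence "m = 0" using M_orth_zero[OF mM] by blast
  thus ?thesis unfolding m_def by (simp add: algebra_simps)
qed

lemma P_scale: "P (scaleC a u) = scaleC a (P u)"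
proof -
  define m where "m = P (scaleC a u) - scaleC a (P u)"
  have mM: "m \<in> M" unfolding m_def using PM M_diff M_scale by blast
  have eq: "m = scaleC a (u - P u) - (scaleC a u - P (scaleC a u))"
    unfolding m_def by (simp add: algebra_simps scaleC_diff_right)
  have "cinner v m = 0" if "v \<in> M" for v
  proof -
    have o1: "cinner v (u - P u) = 0" "cinner v (scaleC a u - P (scaleC a u)) = 0"
      using P_orth[OF that] by blast+
    show ?thesis unfolding eq
      by (subst cinner_lin2[of v a "u - P u" "scaleC a u - P (scaleC a u)"]) (simp only: o1, simp)
  qed
  hence "m = 0" using M_orth_zero[OF mM] by blast
  thus ?thesis unfolding m_def by simp
qed

lemma P_bound: "cnorm (P u) \<le> cnorm u"
proof -
  have "cinner (P u) (u - P u) = 0" by (rule P_orth[OF PM])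
  hence "nsq u = nsq (P u) + nsq (u - P u)"
    using nsq_add[of "P u" "u - P u"] by simp
  hence "nsq (P u) \<le> nsq u" using nsq_ge0[of "u - P u"] by linarith
  thus ?thesis by (simp add: cnorm_nsq)
qed

lemma P_fix: "m \<in> M \<Longrightarrow> P m = m"
proof -
  assume mM: "m \<in> M"
  define d where "d = P m - m"
  have dM: "d \<in> M" unfolding d_def using PM mM M_diff by blast
  have "cinner v d = 0" if "v \<in> M" for v
  proof -
    show ?thesis using P_orth[OF that, of m] by (simp add: d_def cinner_diff_right)
  qed
  hence "d = 0" using M_orth_zero[OF dM] by blast
  thus ?thesis unfolding d_def by simp
qed

definition T :: "'l \<Rightarrow> 'k" where "T u = (SOME w. G (P u) w)"

lemma GT: "G (P u) (T u)"
  unfolding T_def using G_exists[OF PM] by (rule someI_ex)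

lemma T_add: "T (u + u') = T u + T u'"
  using G_add[OF GT[of u] GT[of u']] GT[of "u + u'"] G_unique unfolding P_add by blast

lemma T_scale: "T (scaleC a u) = scaleC a (T u)"
  using G_scale[OF GT[of u], of a] GT[of "scaleC a u"] G_unique unfolding P_scale by blast

lemma T_bound: "cnorm (T u) \<le> cnorm u"
  using G_bound[OF GT, of u] P_bound[of u] by linarith

lemma T_gen: "T (\<psi> x) = \<phi> x"
proof -
  have "P (\<psi> x) = \<psi> x" by (rule P_fix[OF G_M[OF G_gen]])
  thus ?thesis using GT[of "\<psi> x"] G_gen[of x] G_unique by metis
qed

definition B :: "'l \<Rightarrow> 'l" where "B u = (SOME z. \<forall>v. cinner (T u) (T v) = cinner z v)"

lemma B_def': "cinner (B u) v = cinner (T u) (T v)"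
proof -
  have "\<exists>z. \<forall>v. cinner (T u) (T v) = cinner z v"
  proof (rule riesz)
    show "cinner (T u) (T (x + y)) = cinner (T u) (T x) + cinner (T u) (T y)" for x y
      by (simp add: T_add cinner_add_right)
    show "cinner (T u) (T (scaleC a x)) = a * cinner (T u) (T x)" for a x
      by (simp add: T_scale cinner_scaleC_right)
    show "cmod (cinner (T u) (T x)) \<le> cnorm (T u) * cnorm x" for x
      using cauchy_schwarz[of "T u" "T x"] T_bound[of x]
      by (meson cnorm_ge0 mult_left_mono order_trans)
  qed
  hence "\<forall>v. cinner (T u) (T v) = cinner (B u) v" unfolding B_def by (rule someI_ex)
  thus ?thesis by simp
qed

lemma cinner_ext: "(\<And>v. cinner a v = cinner b v) \<Longrightarrow> a = (b::'a::complex_inner)"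
proof -
  assume h: "\<And>v. cinner a v = cinner b v"
  have "cinner (a - b) (a - b) = 0" using h[of "a - b"] by (simp add: cinner_diff_left)
  thus ?thesis by (simp add: cinner_eq_zero_iff)
qed

lemma B_add: "B (x + y) = B x + B y"
  by (rule cinner_ext) (simp add: B_def' cinner_add_left T_add)

lemma B_scale: "B (scaleC a x) = scaleC a (B x)"
  by (rule cinner_ext) (simp add: B_def' cinner_scaleC_left T_scale)

lemma B_bound: "cnorm (B u) \<le> cnorm u"
proof -
  have "nsq (B u) = Re (cinner (T u) (T (B u)))" by (simp add: nsq_def B_def')
  also have "\<dots> \<le> cmod (cinner (T u) (T (B u)))" by (rule complex_Re_le_cmod)
  also have "\<dots> \<le> cnorm (T u) * cnorm (T (B u))" by (rule cauchy_schwarz)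
  also have "\<dots> \<le> cnorm u * cnorm (B u)"
    by (rule mult_mono[OF T_bound T_bound]) simp_all
  finally have h: "cnorm (B u) * cnorm (B u) \<le> cnorm u * cnorm (B u)"
    by (simp add: cnorm_sq[symmetric] power2_eq_square)
  show ?thesis
  proof (cases "cnorm (B u) = 0")
    case True thus ?thesis by simp
  next
    case False
    hence "cnorm (B u) > 0" using cnorm_ge0[of "B u"] by linarith
    thus ?thesis using h by (simp add: mult_le_cancel_right_pos)
  qed
qed

lemma bclB: "bounded_clinear_op B"
  unfolding bounded_clinear_op_def using B_add B_scale B_bound by (metis mult_1)

lemma saB: "selfadjoint_op B"
  unfolding selfadjoint_op_def
proof (intro allI)
  fix u v
  have "cinner u (B v) = cnj (cinner (B v) u)" by (rule cinner_commute)
  also have "\<dots> = cnj (cinner (T v) (T u))" by (simp add: B_def')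
  also have "\<dots> = cinner (T u) (T v)" by (simp flip: cinner_commute)
  finally show "cinner (B u) v = cinner u (B v)" by (simp add: B_def')
qed

lemma B_quad: "Re (cinner u (B u)) = nsq (T u)"
proof -
  have "cinner u (B u) = cinner (T u) (T u)" using sa_sym[OF saB, of u u] by (simp add: B_def')
  thus ?thesis by (simp add: nsq_def)
qed

lemma posB: "positive_op B"
  by (rule positive_opI[OF bclB saB]) (simp add: B_quad)

lemma leB: "op_le B id"
  unfolding op_le_def
proof (rule positive_opI)
  show "bounded_clinear_op (\<lambda>x. id x - B x)" unfolding id_def by (rule bcl_diffop[OF bcl_id bclB])
  show "selfadjoint_op (\<lambda>x. id x - B x)" unfolding id_def by (rule sa_diffop[OF sa_id saB])
  show "Re (cinner x (id x - B x)) \<ge> 0" for x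
  proof -
    have "nsq (T x) \<le> nsq x" using T_bound[of x] by (simp add: cnorm_nsq)
    thus ?thesis using B_quad[of x] by (simp add: cinner_diff_right nsq_def)
  qed
qed

lemma B_K: "cinner (B (\<psi> x)) (\<psi> y) = cinner (\<phi> x) (\<phi> y)"
  by (simp add: B_def' T_gen)

lemma forward: "\<exists>B::'l \<Rightarrow> 'l. positive_op B \<and> op_le B id \<and>
       (\<forall>x y. K x y = cinner (\<phi> x) (\<phi> y) \<and>
              cinner (\<phi> x) (\<phi> y) = cinner (op_sqrt B (\<psi> x)) (op_sqrt B (\<psi> y)))"
proof (intro exI conjI allI)
  show "positive_op B" by (rule posB)
  show "op_le B id" by (rule leB)
  fix x y
  show "K x y = cinner (\<phi> x) (\<phi> y)" using HK unfolding in_HS_def by simp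
  define R where "R = op_sqrt B"
  have pR: "positive_op R" and RR: "\<And>v. R (R v) = B v"
    using op_sqrt_props[OF posB leB] unfolding R_def by auto
  have "cinner (R (\<psi> x)) (R (\<psi> y)) = cinner (\<psi> x) (R (R (\<psi> y)))"
    by (rule sa_sym[OF pos_sa[OF pR]])
  also have "\<dots> = cinner (\<psi> x) (B (\<psi> y))" using RR by simp
  also have "\<dots> = cinner (B (\<psi> x)) (\<psi> y)" by (rule sa_sym[OF saB, symmetric])
  also have "\<dots> = cinner (\<phi> x) (\<phi> y)" by (rule B_K)
  finally show "cinner (\<phi> x) (\<phi> y) = cinner (op_sqrt B (\<psi> x)) (op_sqrt B (\<psi> y))"
    unfolding R_def by simp
qed

end


theorem theorem5p7:
  fixes K L :: "'x \<Rightarrow> 'x \<Rightarrow> complex"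
    and \<phi> :: "'x \<Rightarrow> 'k::chilbert"
    and \<psi> :: "'x \<Rightarrow> 'l::chilbert"
  assumes "pd_kernel K" and "pd_kernel L"
    and "in_HS K \<phi>" and "in_HS L \<psi>"
  shows "kernel_le K L \<longleftrightarrow>
    (\<exists>B::'l \<Rightarrow> 'l. positive_op B \<and> op_le B id \<and>
       (\<forall>x y. K x y = cinner (\<phi> x) (\<phi> y) \<and>
              cinner (\<phi> x) (\<phi> y) = cinner (op_sqrt B (\<psi> x)) (op_sqrt B (\<psi> y))))"
proof
  assume le: "kernel_le K L"
  interpret fwd K L \<phi> \<psi> using assms(3,4) le by unfold_locales
  show "\<exists>B::'l \<Rightarrow> 'l. positive_op B \<and> op_le B id \<and>
       (\<forall>x y. K x y = cinner (\<phi> x) (\<phi> y) \<and>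
              cinner (\<phi> x) (\<phi> y) = cinner (op_sqrt B (\<psi> x)) (op_sqrt B (\<psi> y)))"
    by (rule forward)
next
  assume "\<exists>B::'l \<Rightarrow> 'l. positive_op B \<and> op_le B id \<and>
       (\<forall>x y. K x y = cinner (\<phi> x) (\<phi> y) \<and>
              cinner (\<phi> x) (\<phi> y) = cinner (op_sqrt B (\<psi> x)) (op_sqrt B (\<psi> y)))"
  then obtain B :: "'l \<Rightarrow> 'l" where B1: "positive_op B" and B2: "op_le B id"
    and B3: "\<And>x y. K x y = cinner (\<phi> x) (\<phi> y) \<and>
              cinner (\<phi> x) (\<phi> y) = cinner (op_sqrt B (\<psi> x)) (op_sqrt B (\<psi> y))"
    by blast
  have "K x y = cinner (op_sqrt B (\<psi> x)) (op_sqrt B (\<psi> y))" for x y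
    using B3[of x y] by simp
  thus "kernel_le K L" by (rule reverse_dir[OF assms(4) B1 B2])
qed

end
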